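(* Consider the following four sequences of groups $G_d$ acting on spaces $V_d$, each with the zero-padding maps $\gamma_d\colon V_d\to V_{d+1}$: (i) $V_d=\mathbb{R}^d$, $G_d=\mathfrak{S}_d$ permuting coordinates, $\gamma_d(x)=(x,0)$; (ii) $V_d=\mathbb{R}^{d\times k}$, $G_d=\mathfrak{S}_d$ permuting rows, $\gamma_d$ appending a zero row; (iii) $V_d$ the real symmetric $d\times d$ matrices, $G_d=\mathfrak{S}_d$ acting by $X\mapsto PXP^\top$, $\gamma_d$ appending a zero row and a zero column; (iv) $V_d=\mathbb{R}^{d\times k}$, $G_d$ generated by row permutations and right multiplication by $O(k)$ (acting by $X\mapsto PXQ$), $\gamma_d$ appending a zero row. In each case $\{(V_d,\gamma_d)\}_{d\in\mathbb{N}}$ is a consistent sequence, and for each fixed $m$, for all $d\ge D$ the restriction map $\mathbb{R}[V_{d+1}]_m^{G_{d+1}}\to\mathbb{R}[V_d]_m^{G_d}$, $f\mapsto f\circ\gamma_d$, is a linear isomorphism, where $D=m,\ m,\ 2m,\ 2m$ in cases (i), (ii), (iii), (iv) respectively. That is, the stability degree of $\{(\mathbb{R}[V_d]_m,\gamma_d)\}_{d\in\mathbb{N}}$ is at most $D$.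
   Context: A consistent sequence is a sequence of Euclidean spaces $V_d$ with a nested sequence of compact groups $G_1\subseteq G_2\subseteq\cdots$, $G_d$ acting linearly and orthogonally on $V_d$, together with linear isometries $\gamma_d\colon V_d\to V_{d+1}$ that are $G_d$-equivariant: $\gamma_d(gx)=g\gamma_d(x)$ for $x\in V_d$, $g\in G_d$ (where $G_d\subseteq G_{d+1}$ acts on $V_{d+1}$ fixing the added coordinates). $\mathbb{R}[V]_m$ is the space of real polynomials on $V$ of degree at most $m$ and $\mathbb{R}[V]_m^G$ the $G$-invariant ones. The stability degree of $\{(\mathbb{R}[V_d]_m,\gamma_d)\}$ is the smallest $D$ such that $f\mapsto f\circ\gamma_d$ restricts to an isomorphism $\mathbb{R}[V_{d+1}]_m^{G_{d+1}}\to\mathbb{R}[V_d]_m^{G_d}$ for all $d\ge D$. *)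

theory Defs
  imports Complex_Main "HOL-Combinatorics.Permutations"
begin

text \<open>Ambient model: points of V_d are real-valued functions on a coordinate type 'c
  that vanish outside a finite coordinate set C d.  Zero padding is then the natural
  embedding V_d into V_(d+1).\<close>

definition supp_mi :: "('c \<Rightarrow> nat) \<Rightarrow> 'c set" where
  "supp_mi \<alpha> = {c. \<alpha> c \<noteq> 0}"

definition monomial_fun :: "('c \<Rightarrow> nat) \<Rightarrow> ('c \<Rightarrow> real) \<Rightarrow> real" where
  "monomial_fun \<alpha> x = (\<Prod>c\<in>supp_mi \<alpha>. x c ^ \<alpha> c)"

definition mdeg :: "('c \<Rightarrow> nat) \<Rightarrow> nat" where
  "mdeg \<alpha> = (\<Sum>c\<in>supp_mi \<alpha>. \<alpha> c)"

definition poly_funs :: "('c \<Rightarrow> real) set \<Rightarrow> nat \<Rightarrow> (('c \<Rightarrow> real) \<Rightarrow> real) set" where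
  "poly_funs V m = {f. (\<forall>x. x \<notin> V \<longrightarrow> f x = 0) \<and>
     (\<exists>A coef. finite A \<and> (\<forall>\<alpha>\<in>A. finite (supp_mi \<alpha>) \<and> mdeg \<alpha> \<le> m) \<and>
        (\<forall>x\<in>V. f x = (\<Sum>\<alpha>\<in>A. coef \<alpha> * monomial_fun \<alpha> x)))}"

definition invariant_polys ::
  "('c \<Rightarrow> real) set \<Rightarrow> (('c \<Rightarrow> real) \<Rightarrow> ('c \<Rightarrow> real)) set \<Rightarrow> nat \<Rightarrow> (('c \<Rightarrow> real) \<Rightarrow> real) set" where
  "invariant_polys V G m = {f \<in> poly_funs V m. \<forall>g\<in>G. \<forall>x\<in>V. f (g x) = f x}"

definition restr :: "('c \<Rightarrow> real) set \<Rightarrow> (('c \<Rightarrow> real) \<Rightarrow> ('c \<Rightarrow> real)) \<Rightarrow>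
    (('c \<Rightarrow> real) \<Rightarrow> real) \<Rightarrow> ('c \<Rightarrow> real) \<Rightarrow> real" where
  "restr V \<gamma> f = (\<lambda>x. if x \<in> V then f (\<gamma> x) else 0)"

text \<open>Restriction R[V_(d+1)]_m^(G_(d+1)) \<rightarrow> R[V_d]_m^(G_d) is an isomorphism for all d \<ge> D
  (it is linear by construction, so bijectivity is the content).\<close>
definition stable_from ::
  "(nat \<Rightarrow> ('c \<Rightarrow> real) set) \<Rightarrow> (nat \<Rightarrow> (('c \<Rightarrow> real) \<Rightarrow> ('c \<Rightarrow> real)) set) \<Rightarrow>
   (nat \<Rightarrow> ('c \<Rightarrow> real) \<Rightarrow> ('c \<Rightarrow> real)) \<Rightarrow> nat \<Rightarrow> nat \<Rightarrow> bool" where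
  "stable_from V G \<gamma> m D \<longleftrightarrow>
     (\<forall>d\<ge>D. bij_betw (restr (V d) (\<gamma> d))
                (invariant_polys (V (Suc d)) (G (Suc d)) m) (invariant_polys (V d) (G d) m))"

definition lin_comb :: "real \<Rightarrow> ('c \<Rightarrow> real) \<Rightarrow> real \<Rightarrow> ('c \<Rightarrow> real) \<Rightarrow> ('c \<Rightarrow> real)" where
  "lin_comb a x b y = (\<lambda>c. a * x c + b * y c)"

definition subspace_in :: "'c set \<Rightarrow> ('c \<Rightarrow> real) set \<Rightarrow> bool" where
  "subspace_in C V \<longleftrightarrow> finite C \<and> (\<forall>x\<in>V. \<forall>c. c \<notin> C \<longrightarrow> x c = 0) \<and> (\<lambda>c. 0) \<in> V \<and>
     (\<forall>x\<in>V. \<forall>y\<in>V. \<forall>a b. lin_comb a x b y \<in> V)"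

definition lin_on :: "('c \<Rightarrow> real) set \<Rightarrow> (('c \<Rightarrow> real) \<Rightarrow> ('c \<Rightarrow> real)) \<Rightarrow> bool" where
  "lin_on V h \<longleftrightarrow> (\<forall>x\<in>V. \<forall>y\<in>V. \<forall>a b. h (lin_comb a x b y) = lin_comb a (h x) b (h y))"

definition ip :: "'c set \<Rightarrow> ('c \<Rightarrow> real) \<Rightarrow> ('c \<Rightarrow> real) \<Rightarrow> real" where
  "ip C x y = (\<Sum>c\<in>C. x c * y c)"

definition consistent_seq ::
  "(nat \<Rightarrow> 'c set) \<Rightarrow> (nat \<Rightarrow> ('c \<Rightarrow> real) set) \<Rightarrow>
   (nat \<Rightarrow> (('c \<Rightarrow> real) \<Rightarrow> ('c \<Rightarrow> real)) set) \<Rightarrow> (nat \<Rightarrow> ('c \<Rightarrow> real) \<Rightarrow> ('c \<Rightarrow> real)) \<Rightarrow> bool" where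
  "consistent_seq C V G \<gamma> \<longleftrightarrow>
     (\<forall>d. subspace_in (C d) (V d)) \<and>
     (\<forall>d. G d \<subseteq> G (Suc d)) \<and>
     \<comment> \<open>G d is a group of transformations of V d\<close>
     (\<forall>d. (\<exists>e\<in>G d. \<forall>x\<in>V d. e x = x) \<and>
          (\<forall>g\<in>G d. \<forall>h\<in>G d. \<exists>k\<in>G d. \<forall>x\<in>V d. k x = g (h x)) \<and>
          (\<forall>g\<in>G d. \<exists>h\<in>G d. \<forall>x\<in>V d. h (g x) = x)) \<and>
     \<comment> \<open>G d acts linearly and orthogonally on V d\<close>
     (\<forall>d. \<forall>g\<in>G d. g ` V d \<subseteq> V d \<and> lin_on (V d) g \<and>
          (\<forall>x\<in>V d. \<forall>y\<in>V d. ip (C d) (g x) (g y) = ip (C d) x y)) \<and>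
     \<comment> \<open>\<gamma> d : V d \<rightarrow> V (d+1) is a linear isometry\<close>
     (\<forall>d. \<gamma> d ` V d \<subseteq> V (Suc d) \<and> lin_on (V d) (\<gamma> d) \<and>
          (\<forall>x\<in>V d. \<forall>y\<in>V d. ip (C (Suc d)) (\<gamma> d x) (\<gamma> d y) = ip (C d) x y)) \<and>
     \<comment> \<open>equivariance\<close>
     (\<forall>d. \<forall>g\<in>G d. \<forall>x\<in>V d. \<gamma> d (g x) = g (\<gamma> d x))"

definition C1 :: "nat \<Rightarrow> nat set" where "C1 d = {..<d}"
definition V1 :: "nat \<Rightarrow> (nat \<Rightarrow> real) set" where
  "V1 d = {x. \<forall>i. d \<le> i \<longrightarrow> x i = 0}"
definition G1 :: "nat \<Rightarrow> ((nat \<Rightarrow> real) \<Rightarrow> (nat \<Rightarrow> real)) set" where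
  "G1 d = {(\<lambda>x i. x (\<sigma> i)) | \<sigma>. \<sigma> permutes {..<d}}"
definition \<gamma>1 :: "nat \<Rightarrow> (nat \<Rightarrow> real) \<Rightarrow> (nat \<Rightarrow> real)" where
  "\<gamma>1 d x = (\<lambda>i. if i < d then x i else 0)"

definition C2 :: "nat \<Rightarrow> nat \<Rightarrow> (nat \<times> nat) set" where "C2 k d = {..<d} \<times> {..<k}"
definition V2 :: "nat \<Rightarrow> nat \<Rightarrow> (nat \<times> nat \<Rightarrow> real) set" where
  "V2 k d = {X. \<forall>i j. d \<le> i \<or> k \<le> j \<longrightarrow> X (i, j) = 0}"
definition G2 :: "nat \<Rightarrow> nat \<Rightarrow> ((nat \<times> nat \<Rightarrow> real) \<Rightarrow> (nat \<times> nat \<Rightarrow> real)) set" where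
  "G2 k d = {(\<lambda>X (i, j). X (\<sigma> i, j)) | \<sigma>. \<sigma> permutes {..<d}}"
definition \<gamma>2 :: "nat \<Rightarrow> nat \<Rightarrow> (nat \<times> nat \<Rightarrow> real) \<Rightarrow> (nat \<times> nat \<Rightarrow> real)" where
  "\<gamma>2 k d X = (\<lambda>(i, j). if i < d then X (i, j) else 0)"

text \<open>(iii) symmetric d \<times> d matrices, S_d acting by X \<mapsto> P X P^T.\<close>
definition C3 :: "nat \<Rightarrow> (nat \<times> nat) set" where "C3 d = {..<d} \<times> {..<d}"
definition V3 :: "nat \<Rightarrow> (nat \<times> nat \<Rightarrow> real) set" where
  "V3 d = {X. (\<forall>i j. X (i, j) = X (j, i)) \<and> (\<forall>i j. d \<le> i \<or> d \<le> j \<longrightarrow> X (i, j) = 0)}"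
definition G3 :: "nat \<Rightarrow> ((nat \<times> nat \<Rightarrow> real) \<Rightarrow> (nat \<times> nat \<Rightarrow> real)) set" where
  "G3 d = {(\<lambda>X (i, j). X (\<sigma> i, \<sigma> j)) | \<sigma>. \<sigma> permutes {..<d}}"
definition \<gamma>3 :: "nat \<Rightarrow> (nat \<times> nat \<Rightarrow> real) \<Rightarrow> (nat \<times> nat \<Rightarrow> real)" where
  "\<gamma>3 d X = (\<lambda>(i, j). if i < d \<and> j < d then X (i, j) else 0)"

text \<open>(iv) d \<times> k matrices, S_d \<times> O(k) acting by X \<mapsto> P X Q.\<close>
definition orth :: "nat \<Rightarrow> (nat \<times> nat \<Rightarrow> real) \<Rightarrow> bool" where
  "orth k Q \<longleftrightarrow> (\<forall>a b. a < k \<longrightarrow> b < k \<longrightarrow>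
      (\<Sum>l<k. Q (l, a) * Q (l, b)) = (if a = b then 1 else 0))"
definition G4 :: "nat \<Rightarrow> nat \<Rightarrow> ((nat \<times> nat \<Rightarrow> real) \<Rightarrow> (nat \<times> nat \<Rightarrow> real)) set" where
  "G4 k d = {(\<lambda>X (i, j). if j < k then (\<Sum>l<k. X (\<sigma> i, l) * Q (l, j)) else 0) | \<sigma> Q.
              \<sigma> permutes {..<d} \<and> orth k Q}"

end

theory Submission
  imports Defs "Jordan_Normal_Form.Determinant"
begin


definition prep :: "('c \<Rightarrow> real) set \<Rightarrow> nat \<Rightarrow> (('c \<Rightarrow> real) \<Rightarrow> real) \<Rightarrow> bool" where
  "prep V m f \<longleftrightarrow> (\<exists>A coef. finite A \<and> (\<forall>\<alpha>\<in>A. finite (supp_mi \<alpha>) \<and> mdeg \<alpha> \<le> m) \<and>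
        (\<forall>x\<in>V. f x = (\<Sum>\<alpha>\<in>A. coef \<alpha> * monomial_fun \<alpha> x)))"

lemma poly_funs_prep: "poly_funs V m = {f. (\<forall>x. x \<notin> V \<longrightarrow> f x = 0) \<and> prep V m f}"
  unfolding poly_funs_def prep_def by blast

lemma prep_cong: "prep V m f \<Longrightarrow> (\<And>x. x \<in> V \<Longrightarrow> f x = g x) \<Longrightarrow> prep V m g"
  unfolding prep_def by metis

lemma prep_zero: "prep V m (\<lambda>x. 0)"
  unfolding prep_def by (rule exI[of _ "{}"]) auto

lemma prep_mono: "finite (supp_mi \<alpha>) \<Longrightarrow> mdeg \<alpha> \<le> m \<Longrightarrow> prep V m (\<lambda>x. monomial_fun \<alpha> x)"
  unfolding prep_def by (rule exI[of _ "{\<alpha>}"], rule exI[of _ "\<lambda>_. 1"]) auto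

lemma sum_ind_ext:
  assumes "finite B" "A \<subseteq> B"
  shows "(\<Sum>\<alpha>\<in>B. (if \<alpha> \<in> A then c \<alpha> else 0) * g \<alpha>) = (\<Sum>\<alpha>\<in>A. c \<alpha> * (g \<alpha> :: real))"
proof -
  have "(\<Sum>\<alpha>\<in>B. (if \<alpha> \<in> A then c \<alpha> else 0) * g \<alpha>) = (\<Sum>\<alpha>\<in>B. (if \<alpha> \<in> A then c \<alpha> * g \<alpha> else 0))"
    by (rule sum.cong) auto
  also have "\<dots> = (\<Sum>\<alpha>\<in>B \<inter> A. c \<alpha> * g \<alpha>)" using assms by (simp add: sum.inter_restrict)
  also have "B \<inter> A = A" using assms by auto
  finally show ?thesis .
qed

lemma prep_lin:
  assumes "prep V m f" "prep V m g"
  shows "prep V m (\<lambda>x. a * f x + b * g x)"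
proof -
  obtain A1 c1 where 1: "finite A1" "\<forall>\<alpha>\<in>A1. finite (supp_mi \<alpha>) \<and> mdeg \<alpha> \<le> m"
    "\<forall>x\<in>V. f x = (\<Sum>\<alpha>\<in>A1. c1 \<alpha> * monomial_fun \<alpha> x)" using assms(1) unfolding prep_def by blast
  obtain A2 c2 where 2: "finite A2" "\<forall>\<alpha>\<in>A2. finite (supp_mi \<alpha>) \<and> mdeg \<alpha> \<le> m"
    "\<forall>x\<in>V. g x = (\<Sum>\<alpha>\<in>A2. c2 \<alpha> * monomial_fun \<alpha> x)" using assms(2) unfolding prep_def by blast
  let ?c = "\<lambda>\<alpha>. a * (if \<alpha> \<in> A1 then c1 \<alpha> else 0) + b * (if \<alpha> \<in> A2 then c2 \<alpha> else 0)"
  show ?thesis unfolding prep_def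
  proof (intro exI[of _ "A1 \<union> A2"] exI[of _ ?c] conjI ballI)
    fix x assume x: "x \<in> V"
    have "(\<Sum>\<alpha>\<in>A1 \<union> A2. ?c \<alpha> * monomial_fun \<alpha> x) =
      a * (\<Sum>\<alpha>\<in>A1 \<union> A2. (if \<alpha> \<in> A1 then c1 \<alpha> else 0) * monomial_fun \<alpha> x) +
      b * (\<Sum>\<alpha>\<in>A1 \<union> A2. (if \<alpha> \<in> A2 then c2 \<alpha> else 0) * monomial_fun \<alpha> x)"
      by (simp add: algebra_simps sum.distrib sum_distrib_left)
    also have "\<dots> = a * f x + b * g x"
      using 1 2 x by (simp add: sum_ind_ext)
    finally show "a * f x + b * g x = (\<Sum>\<alpha>\<in>A1 \<union> A2. ?c \<alpha> * monomial_fun \<alpha> x)" by simp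
  qed (use 1 2 in auto)
qed

lemma prep_sum:
  assumes "finite I" "\<And>i. i \<in> I \<Longrightarrow> prep V m (f i)"
  shows "prep V m (\<lambda>x. \<Sum>i\<in>I. a i * f i x)"
  using assms
proof (induction I rule: finite_induct)
  case empty then show ?case by (simp add: prep_zero)
next
  case (insert i I)
  have "prep V m (\<lambda>x. a i * f i x + 1 * (\<Sum>i\<in>I. a i * f i x))"
    by (rule prep_lin) (use insert in auto)
  then show ?case using insert by simp
qed

lemma prep_comp:
  assumes "prep V' m f" "\<And>x. x \<in> V \<Longrightarrow> h x \<in> V'"
    "\<And>\<alpha>. finite (supp_mi \<alpha>) \<Longrightarrow> mdeg \<alpha> \<le> m \<Longrightarrow> prep V m (\<lambda>x. monomial_fun \<alpha> (h x))"
  shows "prep V m (\<lambda>x. f (h x))"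
proof -
  obtain A c where 1: "finite A" "\<forall>\<alpha>\<in>A. finite (supp_mi \<alpha>) \<and> mdeg \<alpha> \<le> m"
    "\<forall>x\<in>V'. f x = (\<Sum>\<alpha>\<in>A. c \<alpha> * monomial_fun \<alpha> x)" using assms(1) unfolding prep_def by blast
  have "prep V m (\<lambda>x. \<Sum>\<alpha>\<in>A. c \<alpha> * monomial_fun \<alpha> (h x))"
    by (rule prep_sum) (use 1 assms(3) in auto)
  then show ?thesis by (rule prep_cong) (use 1 assms(2) in auto)
qed

lemma prep_diff:
  assumes "prep V m f" "prep V m g"
  shows "prep V m (\<lambda>x. f x - g x)"
  using prep_lin[OF assms, of 1 "-1"] by simp

lemma mono_reindex:
  assumes "bij h" "finite (supp_mi \<alpha>)"
  shows "monomial_fun \<alpha> (x \<circ> h) = monomial_fun (\<alpha> \<circ> Hilbert_Choice.inv h) x"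
    "finite (supp_mi (\<alpha> \<circ> Hilbert_Choice.inv h))" "mdeg (\<alpha> \<circ> Hilbert_Choice.inv h) = mdeg \<alpha>"
proof -
  have s: "supp_mi (\<alpha> \<circ> Hilbert_Choice.inv h) = h ` supp_mi \<alpha>"
  proof -
    have iv: "\<And>c. Hilbert_Choice.inv h (h c) = c" "\<And>c. h (Hilbert_Choice.inv h c) = c" using assms(1)
      by (simp_all add: bij_def surj_f_inv_f)
    show ?thesis unfolding supp_mi_def using iv by (auto simp: image_iff) (metis iv(2))
  qed
  have inj: "inj_on h (supp_mi \<alpha>)" using assms(1) by (simp add: bij_def inj_on_def)
  have iv: "\<And>c. Hilbert_Choice.inv h (h c) = c" using assms(1) by (simp add: bij_def)
  show "monomial_fun \<alpha> (x \<circ> h) = monomial_fun (\<alpha> \<circ> Hilbert_Choice.inv h) x"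
    unfolding monomial_fun_def s prod.reindex[OF inj] by (simp add: iv)
  show "finite (supp_mi (\<alpha> \<circ> Hilbert_Choice.inv h))" using s assms(2) by simp
  show "mdeg (\<alpha> \<circ> Hilbert_Choice.inv h) = mdeg \<alpha>"
    unfolding mdeg_def s sum.reindex[OF inj] by (simp add: iv)
qed




locale rowsys =
  fixes rows :: "'c \<Rightarrow> nat set" and mp :: "(nat \<Rightarrow> nat) \<Rightarrow> 'c \<Rightarrow> 'c"
    and W :: "('c \<Rightarrow> real) set" and r :: nat
  assumes rows_fin: "finite (rows c)"
    and rows_card: "card (rows c) \<le> r"
    and rows_mp: "rows (mp \<sigma> c) = \<sigma> ` rows c"
    and mp_id: "mp id = id"
    and mp_comp: "mp \<tau> \<circ> mp \<sigma> = mp (\<tau> \<circ> \<sigma>)"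
    and mp_fix: "(\<forall>i\<in>rows c. \<sigma> i = i) \<Longrightarrow> mp \<sigma> c = c"
    and W_act: "x \<in> W \<Longrightarrow> bij \<sigma> \<Longrightarrow> x \<circ> mp \<sigma> \<in> W"
    and W_pi: "x \<in> W \<Longrightarrow> (\<lambda>c. if rows c \<subseteq> U then x c else 0) \<in> W"
begin

definition act :: "(nat \<Rightarrow> nat) \<Rightarrow> ('c \<Rightarrow> real) \<Rightarrow> ('c \<Rightarrow> real)" where
  "act \<sigma> x = x \<circ> mp \<sigma>"
definition pi :: "nat set \<Rightarrow> ('c \<Rightarrow> real) \<Rightarrow> ('c \<Rightarrow> real)" where
  "pi U x = (\<lambda>c. if rows c \<subseteq> U then x c else 0)"
definition Vd :: "nat \<Rightarrow> ('c \<Rightarrow> real) set" where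
  "Vd d = {x \<in> W. \<forall>c. \<not> rows c \<subseteq> {..<d} \<longrightarrow> x c = 0}"
definition Gd :: "nat \<Rightarrow> (('c \<Rightarrow> real) \<Rightarrow> ('c \<Rightarrow> real)) set" where
  "Gd d = {act \<sigma> | \<sigma>. \<sigma> permutes {..<d}}"
definition touch :: "('c \<Rightarrow> nat) \<Rightarrow> nat set" where
  "touch \<alpha> = \<Union> (rows ` supp_mi \<alpha>)"

lemma act_id[simp]: "act id x = x"
  by (simp add: act_def mp_id)

lemma act_act: "act \<sigma> (act \<tau> x) = act (\<tau> \<circ> \<sigma>) x"
  unfolding act_def by (simp add: comp_assoc mp_comp)

lemma act_apply: "act \<sigma> x c = x (mp \<sigma> c)"
  by (simp add: act_def)

lemma mp_bij: assumes "bij \<sigma>" shows "bij (mp \<sigma>)"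
proof -
  have a: "\<sigma> \<circ> Hilbert_Choice.inv \<sigma> = id" using assms by (auto simp: bij_def surj_f_inv_f fun_eq_iff)
  have b: "Hilbert_Choice.inv \<sigma> \<circ> \<sigma> = id" using assms by (auto simp: bij_def inv_f_f fun_eq_iff)
  have "mp (Hilbert_Choice.inv \<sigma>) \<circ> mp \<sigma> = id" by (simp only: mp_comp b mp_id)
  moreover have "mp \<sigma> \<circ> mp (Hilbert_Choice.inv \<sigma>) = id" by (simp only: mp_comp a mp_id)
  ultimately show ?thesis by (rule o_bij)
qed

lemma mp_inv_apply: assumes "bij \<sigma>" shows "mp \<sigma> (mp (Hilbert_Choice.inv \<sigma>) c) = c"
proof -
  have a: "\<sigma> \<circ> Hilbert_Choice.inv \<sigma> = id" using assms by (auto simp: bij_def surj_f_inv_f fun_eq_iff)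
  have "mp \<sigma> \<circ> mp (Hilbert_Choice.inv \<sigma>) = id" by (simp only: mp_comp a mp_id)
  then show ?thesis by (metis comp_apply id_apply)
qed

lemma Vd_mono: "d \<le> e \<Longrightarrow> Vd d \<subseteq> Vd e"
proof
  fix x assume d: "d \<le> e" and x: "x \<in> Vd d"
  have "{..<d} \<subseteq> {..<e}" using d by auto
  then have "\<And>c. \<not> rows c \<subseteq> {..<e} \<Longrightarrow> \<not> rows c \<subseteq> {..<d}" by (meson subset_trans)
  then show "x \<in> Vd e" using x unfolding Vd_def by blast
qed

lemma Vd_W: "x \<in> Vd d \<Longrightarrow> x \<in> W" unfolding Vd_def by auto

lemma Vd_zero: "x \<in> Vd d \<Longrightarrow> \<not> rows c \<subseteq> {..<d} \<Longrightarrow> x c = 0" unfolding Vd_def by auto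

lemma permutes_image_sub:
  assumes "\<sigma> permutes S" shows "\<sigma> ` A \<subseteq> S \<longleftrightarrow> A \<subseteq> S"
proof
  assume h: "\<sigma> ` A \<subseteq> S"
  show "A \<subseteq> S"
  proof
    fix a assume "a \<in> A"
    then have "\<sigma> a \<in> S" using h by blast
    then show "a \<in> S" using permutes_not_in[OF assms, of a] by fastforce
  qed
next
  assume "A \<subseteq> S" then show "\<sigma> ` A \<subseteq> S" using assms by (auto simp: permutes_in_image)
qed

lemma act_Vd: assumes "\<sigma> permutes {..<d}" "x \<in> Vd d" shows "act \<sigma> x \<in> Vd d"
proof -
  have "bij \<sigma>" using assms(1) permutes_bij by blast
  then have "act \<sigma> x \<in> W" using assms(2) W_act unfolding act_def Vd_def by blast
  moreover have "act \<sigma> x c = 0" if "\<not> rows c \<subseteq> {..<d}" for c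
  proof -
    have "\<not> rows (mp \<sigma> c) \<subseteq> {..<d}" using that permutes_image_sub[OF assms(1)] rows_mp by simp
    then show ?thesis using assms(2) by (simp add: act_apply Vd_def)
  qed
  ultimately show ?thesis unfolding Vd_def by blast
qed

lemma pi_W: "x \<in> W \<Longrightarrow> pi U x \<in> W" unfolding pi_def using W_pi by blast

lemma pi_Vd: "x \<in> W \<Longrightarrow> U \<subseteq> {..<d} \<Longrightarrow> pi U x \<in> Vd d"
  unfolding Vd_def using pi_W by (auto simp: pi_def)

lemma pi_Vd2: "x \<in> Vd d \<Longrightarrow> pi U x \<in> Vd d"
  unfolding Vd_def using pi_W by (auto simp: pi_def)

lemma pi_act: assumes "bij \<sigma>" shows "pi U (act \<sigma> x) = act \<sigma> (pi (\<sigma> ` U) x)"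
proof
  fix c
  have "rows c \<subseteq> U \<longleftrightarrow> \<sigma> ` rows c \<subseteq> \<sigma> ` U"
    using assms by (simp add: bij_is_inj inj_image_subset_iff)
  then show "pi U (act \<sigma> x) c = act \<sigma> (pi (\<sigma> ` U) x) c"
    by (simp add: pi_def act_apply rows_mp)
qed

lemma pi_full: "x \<in> Vd d \<Longrightarrow> pi {..<d} x = x"
  unfolding pi_def Vd_def by auto

lemma pi_Vd_restrict: "x \<in> Vd d \<Longrightarrow> pi U x = pi (U \<inter> {..<d}) x"
  unfolding pi_def Vd_def by auto

lemma mono_pi:
  assumes "finite (supp_mi \<alpha>)"
  shows "monomial_fun \<alpha> (pi U x) = (if touch \<alpha> \<subseteq> U then monomial_fun \<alpha> x else 0)"
proof (cases "touch \<alpha> \<subseteq> U")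
  case True
  then have "\<And>c. c \<in> supp_mi \<alpha> \<Longrightarrow> pi U x c = x c" unfolding touch_def pi_def by auto
  then show ?thesis using True unfolding monomial_fun_def by simp
next
  case False
  then obtain c where c: "c \<in> supp_mi \<alpha>" "\<not> rows c \<subseteq> U" unfolding touch_def by auto
  then have "pi U x c ^ \<alpha> c = 0" by (simp add: pi_def supp_mi_def)
  then have "monomial_fun \<alpha> (pi U x) = 0"
    unfolding monomial_fun_def using assms c(1) by (meson prod_zero)
  then show ?thesis using False by simp
qed

lemma touch_card:
  assumes "finite (supp_mi \<alpha>)"
  shows "finite (touch \<alpha>)" "card (touch \<alpha>) \<le> r * mdeg \<alpha>"
proof -
  show "finite (touch \<alpha>)" unfolding touch_def using assms rows_fin by auto
  have "card (touch \<alpha>) \<le> (\<Sum>c\<in>supp_mi \<alpha>. card (rows c))"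
    unfolding touch_def using card_UN_le[OF assms, of rows] by simp
  also have "\<dots> \<le> (\<Sum>c\<in>supp_mi \<alpha>. r * \<alpha> c)"
  proof (rule sum_mono)
    fix c assume "c \<in> supp_mi \<alpha>"
    then have "1 \<le> \<alpha> c" by (simp add: supp_mi_def)
    then show "card (rows c) \<le> r * \<alpha> c" using rows_card[of c]
      by (metis le_trans mult.right_neutral mult_le_mono2)
  qed
  also have "\<dots> = r * mdeg \<alpha>" unfolding mdeg_def by (simp add: sum_distrib_left)
  finally show "card (touch \<alpha>) \<le> r * mdeg \<alpha>" .
qed

end



lemma prep_sub: "prep V m f \<Longrightarrow> V' \<subseteq> V \<Longrightarrow> prep V' m f"
  unfolding prep_def by blast

context rowsys begin

lemma delta_vanish:
  assumes fin: "finite A" and fs: "\<forall>\<alpha>\<in>A. finite (supp_mi \<alpha>)"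
    and rep: "\<forall>x\<in>V. F x = (\<Sum>\<alpha>\<in>A. c \<alpha> * monomial_fun \<alpha> x)"
    and zV: "\<forall>i\<in>I. \<forall>x\<in>V. pi (-{i}) x \<in> V \<and> F (pi (-{i}) x) = 0"
    and S: "finite S" "S \<subseteq> I"
  shows "\<forall>x\<in>V. F x = (\<Sum>\<alpha>\<in>A. (if S \<subseteq> touch \<alpha> then c \<alpha> else 0) * monomial_fun \<alpha> x)"
  using S
proof (induction S rule: finite_induct)
  case empty then show ?case using rep by simp
next
  case (insert i S)
  show ?case
  proof
    fix x assume x: "x \<in> V"
    have i: "i \<in> I" using insert by auto
    have IH: "\<forall>x\<in>V. F x = (\<Sum>\<alpha>\<in>A. (if S \<subseteq> touch \<alpha> then c \<alpha> else 0) * monomial_fun \<alpha> x)"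
      using insert by auto
    have z: "pi (-{i}) x \<in> V" "F (pi (-{i}) x) = 0" using zV i x by auto
    have "F x = F x - F (pi (-{i}) x)" using z by simp
    also have "\<dots> = (\<Sum>\<alpha>\<in>A. (if S \<subseteq> touch \<alpha> then c \<alpha> else 0) *
                 (monomial_fun \<alpha> x - monomial_fun \<alpha> (pi (-{i}) x)))"
      using IH x z(1) by (simp add: sum_subtractf algebra_simps)
    also have "\<dots> = (\<Sum>\<alpha>\<in>A. (if insert i S \<subseteq> touch \<alpha> then c \<alpha> else 0) * monomial_fun \<alpha> x)"
    proof (rule sum.cong)
      fix \<alpha> assume "\<alpha> \<in> A"
      then have "finite (supp_mi \<alpha>)" using fs by auto
      then have "monomial_fun \<alpha> (pi (-{i}) x) = (if i \<in> touch \<alpha> then 0 else monomial_fun \<alpha> x)"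
        by (simp add: mono_pi subset_Compl_singleton)
      then show "(if S \<subseteq> touch \<alpha> then c \<alpha> else 0) *
                 (monomial_fun \<alpha> x - monomial_fun \<alpha> (pi (-{i}) x)) =
             (if insert i S \<subseteq> touch \<alpha> then c \<alpha> else 0) * monomial_fun \<alpha> x"
        by auto
    qed simp
    finally show "F x = (\<Sum>\<alpha>\<in>A. (if insert i S \<subseteq> touch \<alpha> then c \<alpha> else 0) * monomial_fun \<alpha> x)" .
  qed
qed

lemma transpose_permutes_Suc:
  "i < Suc d \<Longrightarrow> transpose i d permutes {..<Suc d}"
  by (rule permutes_swap_id) auto

lemma inj_main:
  assumes rm: "r * m < Suc d"
    and F1: "F1 \<in> poly_funs (Vd (Suc d)) m" and F2: "F2 \<in> poly_funs (Vd (Suc d)) m"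
    and i1: "\<And>\<sigma> x. \<sigma> permutes {..<Suc d} \<Longrightarrow> x \<in> Vd (Suc d) \<Longrightarrow> F1 (act \<sigma> x) = F1 x"
    and i2: "\<And>\<sigma> x. \<sigma> permutes {..<Suc d} \<Longrightarrow> x \<in> Vd (Suc d) \<Longrightarrow> F2 (act \<sigma> x) = F2 x"
    and agree: "\<And>x. x \<in> Vd d \<Longrightarrow> F1 x = F2 x"
  shows "F1 = F2"
proof -
  let ?V = "Vd (Suc d)"
  define H where "H = (\<lambda>x. F1 x - F2 x)"
  have "prep ?V m H" unfolding H_def
    using F1 F2 by (intro prep_diff) (auto simp: poly_funs_prep)
  then obtain A c where A: "finite A" "\<forall>\<alpha>\<in>A. finite (supp_mi \<alpha>) \<and> mdeg \<alpha> \<le> m"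
    "\<forall>x\<in>?V. H x = (\<Sum>\<alpha>\<in>A. c \<alpha> * monomial_fun \<alpha> x)" unfolding prep_def by blast
  have Hinv: "H (act \<sigma> x) = H x" if "\<sigma> permutes {..<Suc d}" "x \<in> ?V" for \<sigma> x
    using i1[OF that] i2[OF that] by (simp add: H_def)
  have zV: "\<forall>i\<in>{..<Suc d}. \<forall>x\<in>?V. pi (-{i}) x \<in> ?V \<and> H (pi (-{i}) x) = 0"
  proof (intro ballI conjI)
    fix i x assume i: "i \<in> {..<Suc d}" and x: "x \<in> ?V"
    show "pi (-{i}) x \<in> ?V" using x by (rule pi_Vd2)
    define \<tau> where "\<tau> = transpose i d"
    have \<tau>: "\<tau> permutes {..<Suc d}" using i transpose_permutes_Suc unfolding \<tau>_def by auto
    have b\<tau>: "bij \<tau>" using \<tau> permutes_bij by blast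
    define y where "y = pi (-{d}) (act \<tau> x)"
    have ax: "act \<tau> x \<in> ?V" using act_Vd[OF \<tau> x] .
    have yd: "y \<in> Vd d"
      unfolding Vd_def
    proof (intro CollectI conjI allI impI)
      show "y \<in> W" unfolding y_def using ax Vd_W pi_W by blast
      fix c assume c: "\<not> rows c \<subseteq> {..<d}"
      show "y c = 0"
      proof (cases "rows c \<subseteq> -{d}")
        case True
        then have "\<not> rows c \<subseteq> {..<Suc d}" using c by (auto simp: less_Suc_eq)
        then show ?thesis using ax unfolding y_def pi_def by (simp add: Vd_zero)
      next
        case False then show ?thesis unfolding y_def pi_def by simp
      qed
    qed
    have img: "\<tau> ` (-{d}) = -{i}"
      using bij_image_Compl_eq[OF b\<tau>, of "{d}"] by (simp add: \<tau>_def)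
    have "act \<tau> y = act \<tau> (act \<tau> (pi (-{i}) x))"
      unfolding y_def pi_act[OF b\<tau>] img ..
    also have "\<dots> = pi (-{i}) x" by (simp add: act_act \<tau>_def)
    finally have e: "act \<tau> y = pi (-{i}) x" .
    have "y \<in> ?V" using yd Vd_mono[of d "Suc d"] by auto
    then have "H (pi (-{i}) x) = H y" using Hinv[OF \<tau>] e by metis
    also have "\<dots> = 0" using agree[OF yd] by (simp add: H_def)
    finally show "H (pi (-{i}) x) = 0" .
  qed
  have all: "\<forall>x\<in>?V. H x = (\<Sum>\<alpha>\<in>A. (if {..<Suc d} \<subseteq> touch \<alpha> then c \<alpha> else 0) * monomial_fun \<alpha> x)"
    by (rule delta_vanish[OF A(1) _ A(3) zV]) (use A(2) in auto)
  have nt: "\<not> {..<Suc d} \<subseteq> touch \<alpha>" if "\<alpha> \<in> A" for \<alpha>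
  proof
    assume "{..<Suc d} \<subseteq> touch \<alpha>"
    then have "card {..<Suc d} \<le> card (touch \<alpha>)"
      using touch_card(1) A(2) that by (intro card_mono) auto
    also have "\<dots> \<le> r * mdeg \<alpha>" using touch_card(2) A(2) that by auto
    also have "\<dots> \<le> r * m" using A(2) that by auto
    finally show False using rm by simp
  qed
  have "H x = 0" if "x \<in> ?V" for x
    using all that nt by simp
  then have "F1 x = F2 x" for x
    using F1 F2 unfolding poly_funs_def H_def by (cases "x \<in> ?V") auto
  then show ?thesis by auto
qed


definition jU :: "nat \<Rightarrow> nat set \<Rightarrow> nat" where
  "jU d U = (SOME j. j \<in> {..<Suc d} \<and> j \<notin> U)"
definition wU :: "nat \<Rightarrow> nat set \<Rightarrow> ('c \<Rightarrow> real) \<Rightarrow> ('c \<Rightarrow> real)" where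
  "wU d U x = act (transpose (jU d U) d) (pi U x)"
definition PP :: "nat \<Rightarrow> nat set set" where
  "PP d = Pow {..<Suc d} - {{..<Suc d}}"
definition ext :: "nat \<Rightarrow> (('c \<Rightarrow> real) \<Rightarrow> real) \<Rightarrow> ('c \<Rightarrow> real) \<Rightarrow> real" where
  "ext d f x = (if x \<in> Vd (Suc d) then
     - (\<Sum>U\<in>PP d. (-1::real) ^ card ({..<Suc d} - U) * f (wU d U x)) else 0)"

lemma jU: assumes "U \<in> PP d" shows "jU d U < Suc d" "jU d U \<notin> U"
proof -
  have "\<exists>j. j \<in> {..<Suc d} \<and> j \<notin> U" using assms unfolding PP_def by auto
  from someI_ex[OF this] show "jU d U < Suc d" "jU d U \<notin> U" unfolding jU_def by auto
qed

lemma PP_finite: "finite (PP d)" unfolding PP_def by simp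

lemma wU_Vd: assumes U: "U \<in> PP d" and x: "x \<in> Vd (Suc d)" shows "wU d U x \<in> Vd d"
proof -
  define j where "j = jU d U"
  define \<tau> where "\<tau> = transpose j d"
  have j: "j < Suc d" "j \<notin> U" using jU[OF U] unfolding j_def by auto
  have \<tau>: "\<tau> permutes {..<Suc d}" unfolding \<tau>_def using j transpose_permutes_Suc by auto
  have b: "bij \<tau>" using \<tau> permutes_bij by blast
  have z: "pi U x \<in> Vd (Suc d)" using x by (rule pi_Vd2)
  show ?thesis unfolding Vd_def
  proof (intro CollectI conjI allI impI)
    show "wU d U x \<in> W" unfolding wU_def act_def j_def[symmetric] \<tau>_def[symmetric]
      using W_act[OF Vd_W[OF z] b] .
    fix c assume c: "\<not> rows c \<subseteq> {..<d}"
    have e: "wU d U x c = pi U x (mp \<tau> c)"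
      unfolding wU_def j_def[symmetric] \<tau>_def[symmetric] by (simp add: act_apply)
    show "wU d U x c = 0"
    proof (cases "rows c \<subseteq> {..<Suc d}")
      case False
      then have "\<not> rows (mp \<tau> c) \<subseteq> {..<Suc d}" using permutes_image_sub[OF \<tau>] rows_mp by simp
      then show ?thesis using e z Vd_zero by simp
    next
      case True
      then have "d \<in> rows c" using c by (auto simp: less_Suc_eq)
      then have "j \<in> rows (mp \<tau> c)" by (simp add: rows_mp \<tau>_def image_iff) (metis transpose_apply_second)
      then have "\<not> rows (mp \<tau> c) \<subseteq> U" using j by auto
      then show ?thesis using e by (simp add: pi_def)
    qed
  qed
qed

lemma wU_fix: assumes U: "U \<in> PP d" and x: "x \<in> Vd d" shows "wU d U x = pi (U - {d}) x"
proof
  fix c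
  define j where "j = jU d U"
  define \<tau> where "\<tau> = transpose j d"
  have j: "j < Suc d" "j \<notin> U" using jU[OF U] unfolding j_def by auto
  have e: "wU d U x c = (if \<tau> ` rows c \<subseteq> U then x (mp \<tau> c) else 0)"
    unfolding wU_def j_def[symmetric] \<tau>_def[symmetric] by (simp add: act_apply pi_def rows_mp)
  show "wU d U x c = pi (U - {d}) x c"
  proof (cases "rows c \<subseteq> U - {d}")
    case True
    then have fx: "\<forall>i\<in>rows c. \<tau> i = i" using j unfolding \<tau>_def by (auto intro!: transpose_apply_other)
    then have "\<tau> ` rows c = rows c" by auto
    then show ?thesis using e mp_fix[OF fx] True by (auto simp: pi_def)
  next
    case False
    have "x (mp \<tau> c) = 0" if h: "\<tau> ` rows c \<subseteq> U"
    proof (rule ccontr)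
      assume nz: "x (mp \<tau> c) \<noteq> 0"
      then have sub: "\<tau> ` rows c \<subseteq> {..<d}" using x Vd_zero rows_mp by metis
      have nd: "d \<notin> rows c"
      proof
        assume "d \<in> rows c" then have "j \<in> \<tau> ` rows c" unfolding \<tau>_def by force
        then show False using h j by auto
      qed
      have nj: "j \<notin> rows c"
      proof
        assume "j \<in> rows c" then have "d \<in> \<tau> ` rows c" unfolding \<tau>_def by force
        then show False using sub by auto
      qed
      have "\<tau> ` rows c = rows c" using nd nj unfolding \<tau>_def by (auto intro!: transpose_apply_other)
      then have "rows c \<subseteq> U - {d}" using h nd by auto
      then show False using False by simp
    qed
    then show ?thesis using e False by (auto simp: pi_def)
  qed
qed

lemma sign_sum:
  fixes g :: "nat set \<Rightarrow> real"
  shows "(\<Sum>U\<in>PP d. (-1::real) ^ card ({..<Suc d} - U) * g (U - {d})) = - g {..<d}"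
proof -
  let ?N = "{..<Suc d}" and ?D = "{..<d}"
  let ?t = "\<lambda>U. (-1::real) ^ card (?N - U) * g (U - {d})"
  have P: "PP d = Pow ?D \<union> insert d ` (Pow ?D - {?D})"
  proof (intro equalityI subsetI)
    fix U assume "U \<in> PP d"
    then have U: "U \<subseteq> ?N" "U \<noteq> ?N" unfolding PP_def by auto
    show "U \<in> Pow ?D \<union> insert d ` (Pow ?D - {?D})"
    proof (cases "d \<in> U")
      case True
      have "U - {d} \<subseteq> ?D" using U by (auto simp: less_Suc_eq)
      moreover have "U - {d} \<noteq> ?D" using U True by (auto simp: lessThan_Suc)
      moreover have "U = insert d (U - {d})" using True by auto
      ultimately show ?thesis by blast
    next
      case False then have "U \<subseteq> ?D" using U by (auto simp: less_Suc_eq)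
      then show ?thesis by auto
    qed
  next
    fix U assume "U \<in> Pow ?D \<union> insert d ` (Pow ?D - {?D})"
    then show "U \<in> PP d" unfolding PP_def by (auto simp: lessThan_Suc)
  qed
  have disj: "Pow ?D \<inter> insert d ` (Pow ?D - {?D}) = {}" by auto
  have inj: "inj_on (insert d) (Pow ?D - {?D})" unfolding inj_on_def by auto
  have s1: "(\<Sum>U\<in>Pow ?D. ?t U) = (\<Sum>U\<in>Pow ?D. - ((-1::real) ^ card (?D - U) * g U))"
  proof (rule sum.cong)
    fix U assume U: "U \<in> Pow ?D"
    then have "?N - U = insert d (?D - U)" by (auto simp: lessThan_Suc)
    then have "card (?N - U) = Suc (card (?D - U))" by simp
    moreover have "U - {d} = U" using U by auto
    ultimately show "?t U = - ((-1::real) ^ card (?D - U) * g U)" by simp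
  qed simp
  have s2: "(\<Sum>U\<in>insert d ` (Pow ?D - {?D}). ?t U) = (\<Sum>U\<in>Pow ?D - {?D}. (-1::real) ^ card (?D - U) * g U)"
    unfolding sum.reindex[OF inj] 
  proof (rule sum.cong)
    fix U assume U: "U \<in> Pow ?D - {?D}"
    then have "?N - insert d U = ?D - U" by (auto simp: lessThan_Suc)
    moreover have "insert d U - {d} = U" using U by auto
    ultimately show "(?t \<circ> insert d) U = (-1::real) ^ card (?D - U) * g U" by simp
  qed simp
  have s3: "(\<Sum>U\<in>Pow ?D. - ((-1::real) ^ card (?D - U) * g U)) =
      - g ?D + (\<Sum>U\<in>Pow ?D - {?D}. - ((-1::real) ^ card (?D - U) * g U))"
    by (subst sum.remove[of _ ?D]) auto
  have "(\<Sum>U\<in>PP d. ?t U) = (\<Sum>U\<in>Pow ?D. ?t U) + (\<Sum>U\<in>insert d ` (Pow ?D - {?D}). ?t U)"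
    unfolding P by (rule sum.union_disjoint) (use disj in auto)
  also have "\<dots> = - g ?D" unfolding s1 s2 s3 by (simp add: sum_negf)
  finally show ?thesis .
qed

lemma ext_restr:
  assumes x: "x \<in> Vd d" shows "ext d f x = f x"
proof -
  have xs: "x \<in> Vd (Suc d)" using x Vd_mono[of d "Suc d"] by auto
  have "(\<Sum>U\<in>PP d. (-1::real) ^ card ({..<Suc d} - U) * f (wU d U x)) =
        (\<Sum>U\<in>PP d. (-1::real) ^ card ({..<Suc d} - U) * f (pi (U - {d}) x))"
    by (rule sum.cong) (simp_all add: wU_fix[OF _ x])
  also have "\<dots> = - f (pi {..<d} x)" by (rule sign_sum)
  also have "\<dots> = - f x" using pi_full[OF x] by simp
  finally show ?thesis unfolding ext_def using xs by simp
qed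


lemma permutes_Suc_fix:
  assumes "\<rho> permutes {..<Suc d}" "\<rho> d = d" shows "\<rho> permutes {..<d}"
  using assms unfolding permutes_def
  by (metis lessThan_iff less_Suc_eq)

lemma orbit:
  assumes z: "z \<in> Vd d" and \<rho>: "\<rho> permutes {..<Suc d}" and az: "act \<rho> z \<in> Vd d"
  shows "\<exists>\<rho>'. \<rho>' permutes {..<d} \<and> act \<rho>' z = act \<rho> z"
proof -
  define a where "a = \<rho> d"
  define \<tau> where "\<tau> = transpose a d"
  have a: "a < Suc d" unfolding a_def using permutes_in_image[OF \<rho>] by auto
  have \<tau>: "\<tau> permutes {..<Suc d}" unfolding \<tau>_def using a transpose_permutes_Suc by auto
  have b\<rho>: "bij \<rho>" using \<rho> permutes_bij by blast
  define \<rho>' where "\<rho>' = \<tau> \<circ> \<rho>"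
  have p1: "\<rho>' permutes {..<Suc d}" unfolding \<rho>'_def using permutes_compose[OF \<rho> \<tau>] .
  have "\<rho>' d = d" unfolding \<rho>'_def \<tau>_def a_def by simp
  then have p: "\<rho>' permutes {..<d}" using permutes_Suc_fix[OF p1] by blast
  have zero: "z c = 0" if "a \<in> rows c \<or> d \<in> rows c" for c
    using that
  proof
    assume "d \<in> rows c" then show ?thesis using z Vd_zero by auto
  next
    assume ac: "a \<in> rows c"
    define c3 where "c3 = mp (Hilbert_Choice.inv \<rho>) c"
    have "mp \<rho> c3 = c" unfolding c3_def using mp_inv_apply[OF b\<rho>] .
    moreover have "d \<in> rows c3" unfolding c3_def rows_mp using ac
      by (metis a_def b\<rho> bij_inv_eq_iff image_eqI)
    then have "act \<rho> z c3 = 0" using az Vd_zero by auto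
    ultimately show ?thesis by (simp add: act_apply)
  qed
  have "act \<rho>' z c = act \<rho> z c" for c
  proof -
    define c' where "c' = mp \<rho> c"
    have e1: "act \<rho>' z c = z (mp \<tau> c')" unfolding \<rho>'_def c'_def act_apply
      by (metis comp_apply mp_comp)
    have "z (mp \<tau> c') = z c'"
    proof (cases "\<forall>i\<in>rows c'. \<tau> i = i")
      case True then show ?thesis using mp_fix by simp
    next
      case False
      then obtain i where i: "i \<in> rows c'" "\<tau> i \<noteq> i" by blast
      then have iad: "i = a \<or> i = d" unfolding \<tau>_def by (metis transpose_apply_other)
      then have "a \<in> rows c' \<or> d \<in> rows c'" using i by auto
      moreover have "a \<in> rows (mp \<tau> c') \<or> d \<in> rows (mp \<tau> c')"
        using iad i unfolding rows_mp \<tau>_def by force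
      ultimately show ?thesis using zero by metis
    qed
    then show ?thesis using e1 by (simp add: act_apply c'_def)
  qed
  then show ?thesis using p by blast
qed

lemma ext_inv_perm:
  assumes \<sigma>: "\<sigma> permutes {..<Suc d}" and x: "x \<in> Vd (Suc d)"
    and finv: "\<And>\<rho> y. \<rho> permutes {..<d} \<Longrightarrow> y \<in> Vd d \<Longrightarrow> f (act \<rho> y) = f y"
  shows "ext d f (act \<sigma> x) = ext d f x"
proof -
  let ?N = "{..<Suc d}"
  have b\<sigma>: "bij \<sigma>" using \<sigma> permutes_bij by blast
  have ax: "act \<sigma> x \<in> Vd (Suc d)" using act_Vd[OF \<sigma> x] .
  let ?T = "\<lambda>U. (-1::real) ^ card (?N - U) * f (wU d U x)"
  have bb: "bij_betw (\<lambda>U. \<sigma> ` U) (PP d) (PP d)"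
  proof -
    have "bij_betw (\<lambda>U. \<sigma> ` U) (Pow ?N) (Pow ?N)"
      using bij_betw_Pow[OF permutes_imp_bij[OF \<sigma>]] .
    moreover have "\<sigma> ` ?N = ?N" using permutes_image[OF \<sigma>] .
    ultimately show ?thesis unfolding PP_def
      by (intro bij_betw_DiffI) auto
  qed
  have "(\<Sum>U\<in>PP d. (-1::real) ^ card (?N - U) * f (wU d U (act \<sigma> x))) =
        (\<Sum>U\<in>PP d. ?T (\<sigma> ` U))"
  proof (rule sum.cong)
    fix U assume U: "U \<in> PP d"
    let ?U' = "\<sigma> ` U"
    have U': "?U' \<in> PP d" using bb U bij_betwE by blast
    have "card (?N - ?U') = card (\<sigma> ` (?N - U))"
      using permutes_image[OF \<sigma>] b\<sigma> by (metis bij_is_inj image_set_diff)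
    also have "\<dots> = card (?N - U)" using b\<sigma> by (metis bij_betw_imp_inj_on card_image inj_on_subset subset_UNIV)
    finally have cd: "card (?N - ?U') = card (?N - U)" .
    define \<tau>1 where "\<tau>1 = transpose (jU d U) d"
    define \<tau>2 where "\<tau>2 = transpose (jU d ?U') d"
    have t1: "\<tau>1 permutes ?N" unfolding \<tau>1_def using jU[OF U] transpose_permutes_Suc by auto
    have t2: "\<tau>2 permutes ?N" unfolding \<tau>2_def using jU[OF U'] transpose_permutes_Suc by auto
    define y where "y = pi ?U' x"
    have w1: "wU d U (act \<sigma> x) = act (\<sigma> \<circ> \<tau>1) y"
      unfolding wU_def \<tau>1_def[symmetric] y_def pi_act[OF b\<sigma>] act_act ..
    have w2: "wU d ?U' x = act \<tau>2 y" unfolding wU_def \<tau>2_def[symmetric] y_def ..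
    define \<rho> where "\<rho> = \<tau>2 \<circ> (\<sigma> \<circ> \<tau>1)"
    have \<rho>: "\<rho> permutes ?N" unfolding \<rho>_def
      by (intro permutes_compose t1 t2 \<sigma>)
    have "act \<rho> (act \<tau>2 y) = act (\<sigma> \<circ> \<tau>1) y"
      unfolding act_act \<rho>_def \<tau>2_def by (simp add: comp_assoc[symmetric])
    then have e: "act \<rho> (wU d ?U' x) = wU d U (act \<sigma> x)" using w1 w2 by simp
    have z: "wU d ?U' x \<in> Vd d" using wU_Vd[OF U' x] .
    have az: "act \<rho> (wU d ?U' x) \<in> Vd d" unfolding e using wU_Vd[OF U ax] .
    obtain \<rho>' where \<rho>': "\<rho>' permutes {..<d}" "act \<rho>' (wU d ?U' x) = act \<rho> (wU d ?U' x)"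
      using orbit[OF z \<rho> az] by blast
    have "f (wU d U (act \<sigma> x)) = f (wU d ?U' x)"
      using finv[OF \<rho>'(1) z] \<rho>'(2) e by simp
    then show "(-1::real) ^ card (?N - U) * f (wU d U (act \<sigma> x)) = ?T (\<sigma> ` U)"
      using cd by simp
  qed simp
  also have "\<dots> = (\<Sum>U\<in>PP d. ?T U)" using sum.reindex_bij_betw[OF bb, of ?T] .
  finally show ?thesis unfolding ext_def using x ax by simp
qed

lemma ext_inv_h:
  assumes x: "x \<in> Vd (Suc d)" and hV: "h x \<in> Vd (Suc d)"
    and hw: "\<And>U. U \<in> PP d \<Longrightarrow> wU d U (h x) = h (wU d U x)"
    and fh: "\<And>y. y \<in> Vd d \<Longrightarrow> f (h y) = f y"
  shows "ext d f (h x) = ext d f x"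
  unfolding ext_def using x hV hw fh wU_Vd[OF _ x] by simp

lemma ext_poly:
  assumes f: "f \<in> poly_funs (Vd d) m"
  shows "ext d f \<in> poly_funs (Vd (Suc d)) m"
proof -
  let ?N = "{..<Suc d}"
  have pf: "prep (Vd d) m f" using f by (simp add: poly_funs_prep)
  have each: "prep (Vd (Suc d)) m (\<lambda>x. f (wU d U x))" if U: "U \<in> PP d" for U
  proof (rule prep_comp[OF pf])
    show "\<And>x. x \<in> Vd (Suc d) \<Longrightarrow> wU d U x \<in> Vd d" using wU_Vd[OF U] .
    fix \<alpha> :: "'c \<Rightarrow> nat" assume fa: "finite (supp_mi \<alpha>)" and dm: "mdeg \<alpha> \<le> m"
    define \<tau> where "\<tau> = transpose (jU d U) d"
    have b: "bij (mp \<tau>)" using mp_bij unfolding \<tau>_def by simp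
    define \<beta> where "\<beta> = \<alpha> \<circ> Hilbert_Choice.inv (mp \<tau>)"
    have fb: "finite (supp_mi \<beta>)" "mdeg \<beta> \<le> m"
      using mono_reindex(2,3)[OF b fa] dm unfolding \<beta>_def by auto
    have e: "monomial_fun \<alpha> (wU d U x) = (if touch \<beta> \<subseteq> U then monomial_fun \<beta> x else 0)" for x
      unfolding wU_def \<tau>_def[symmetric] act_def mono_reindex(1)[OF b fa] \<beta>_def[symmetric]
      using mono_pi[OF fb(1)] .
    show "prep (Vd (Suc d)) m (\<lambda>x. monomial_fun \<alpha> (wU d U x))"
    proof (cases "touch \<beta> \<subseteq> U")
      case True
      then show ?thesis using prep_mono[OF fb] e by (simp add: prep_cong)
    next
      case False
      then show ?thesis using prep_zero e by (simp add: prep_cong)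
    qed
  qed
  have "prep (Vd (Suc d)) m (\<lambda>x. \<Sum>U\<in>PP d. (- ((-1::real) ^ card (?N - U))) * f (wU d U x))"
    by (rule prep_sum[OF PP_finite each])
  then have "prep (Vd (Suc d)) m (ext d f)"
    by (rule prep_cong) (simp add: ext_def sum_negf)
  then show ?thesis unfolding poly_funs_prep by (simp add: ext_def)
qed


lemma restr_id: "(\<forall>x\<in>V. \<gamma> x = x) \<Longrightarrow> restr V \<gamma> F = (\<lambda>x. if x \<in> V then F x else 0)"
  unfolding restr_def by auto

lemma Gd_inv: "f \<in> invariant_polys (Vd d) (Gd d) m \<longleftrightarrow>
   f \<in> poly_funs (Vd d) m \<and> (\<forall>\<sigma> x. \<sigma> permutes {..<d} \<longrightarrow> x \<in> Vd d \<longrightarrow> f (act \<sigma> x) = f x)"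
  unfolding invariant_polys_def Gd_def by auto

lemma poly_restr:
  assumes "F \<in> poly_funs (Vd (Suc d)) m"
  shows "(\<lambda>x. if x \<in> Vd d then F x else 0) \<in> poly_funs (Vd d) m"
proof -
  have "prep (Vd d) m F" using assms prep_sub Vd_mono[of d "Suc d"] by (auto simp: poly_funs_prep)
  then have "prep (Vd d) m (\<lambda>x. if x \<in> Vd d then F x else 0)" by (rule prep_cong) simp
  then show ?thesis by (simp add: poly_funs_prep)
qed

theorem stable:
  assumes \<gamma>: "\<forall>d. \<forall>x\<in>Vd d. \<gamma> d x = x" and D: "r * m \<le> D"
  shows "stable_from Vd Gd \<gamma> m D"
  unfolding stable_from_def
proof (intro allI impI)
  fix d assume dD: "D \<le> d"
  let ?R = "restr (Vd d) (\<gamma> d)"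
  have R: "\<And>F. ?R F = (\<lambda>x. if x \<in> Vd d then F x else 0)" using restr_id \<gamma> by blast
  have sub: "Vd d \<subseteq> Vd (Suc d)" using Vd_mono by simp
  show "bij_betw ?R (invariant_polys (Vd (Suc d)) (Gd (Suc d)) m) (invariant_polys (Vd d) (Gd d) m)"
    unfolding bij_betw_def
  proof (intro conjI)
    show "inj_on ?R (invariant_polys (Vd (Suc d)) (Gd (Suc d)) m)"
    proof (rule inj_onI)
      fix F1 F2 assume F1: "F1 \<in> invariant_polys (Vd (Suc d)) (Gd (Suc d)) m"
        and F2: "F2 \<in> invariant_polys (Vd (Suc d)) (Gd (Suc d)) m" and e: "?R F1 = ?R F2"
      have ag: "F1 x = F2 x" if "x \<in> Vd d" for x using fun_cong[OF e, of x] that R by simp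
      show "F1 = F2"
        by (rule inj_main[of m d]) (use D dD F1 F2 ag in \<open>auto simp: Gd_inv\<close>)
    qed
    show "?R ` invariant_polys (Vd (Suc d)) (Gd (Suc d)) m = invariant_polys (Vd d) (Gd d) m"
    proof (intro equalityI subsetI)
      fix f assume "f \<in> ?R ` invariant_polys (Vd (Suc d)) (Gd (Suc d)) m"
      then obtain F where F: "F \<in> invariant_polys (Vd (Suc d)) (Gd (Suc d)) m" and f: "f = ?R F" by blast
      have fF: "f = (\<lambda>x. if x \<in> Vd d then F x else 0)" using f R by simp
      show "f \<in> invariant_polys (Vd d) (Gd d) m" unfolding Gd_inv
      proof (intro conjI allI impI)
        show "f \<in> poly_funs (Vd d) m" unfolding fF using F poly_restr by (simp add: Gd_inv)
        fix \<sigma> x assume \<sigma>: "\<sigma> permutes {..<d}" and x: "x \<in> Vd d"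
        have \<sigma>': "\<sigma> permutes {..<Suc d}" using permutes_subset[OF \<sigma>] by auto
        show "f (act \<sigma> x) = f x" unfolding fF using act_Vd[OF \<sigma> x] x F \<sigma>' sub by (auto simp: Gd_inv)
      qed
    next
      fix f assume f: "f \<in> invariant_polys (Vd d) (Gd d) m"
      have "ext d f \<in> invariant_polys (Vd (Suc d)) (Gd (Suc d)) m" unfolding Gd_inv
        using ext_poly ext_inv_perm f by (auto simp: Gd_inv)
      moreover have "?R (ext d f) = f"
      proof
        fix x show "?R (ext d f) x = f x"
          using R ext_restr f by (auto simp: Gd_inv poly_funs_def)
      qed
      ultimately show "f \<in> ?R ` invariant_polys (Vd (Suc d)) (Gd (Suc d)) m" by force
    qed
  qed
qed

theorem consistent:
  assumes C1: "\<And>d. finite (C d)" and C2: "\<And>d x c. x \<in> Vd d \<Longrightarrow> c \<notin> C d \<Longrightarrow> x c = 0"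
    and C3: "\<And>d \<sigma>. \<sigma> permutes {..<d} \<Longrightarrow> bij_betw (mp \<sigma>) (C d) (C d)"
    and C4: "\<And>d. C d \<subseteq> C (Suc d)"
    and W0: "(\<lambda>c. 0) \<in> W" and Wlin: "\<And>x y a b. x \<in> W \<Longrightarrow> y \<in> W \<Longrightarrow> lin_comb a x b y \<in> W"
    and \<gamma>: "\<forall>d. \<forall>x\<in>Vd d. \<gamma> d x = x"
  shows "consistent_seq C Vd Gd \<gamma>"
proof -
  have lc: "lin_comb a x b y \<in> Vd d" if "x \<in> Vd d" "y \<in> Vd d" for a b x y d
    using that Wlin unfolding Vd_def by (auto simp: lin_comb_def)
  have sub: "subspace_in (C d) (Vd d)" for d
  proof -
    have z: "(\<lambda>c. 0) \<in> Vd d" using W0 by (simp add: Vd_def)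
    show ?thesis unfolding subspace_in_def using C1 C2 z lc by blast
  qed
  have mono: "Gd d \<subseteq> Gd (Suc d)" for d
    unfolding Gd_def using permutes_subset[of _ "{..<d}" "{..<Suc d}"] by auto
  have grp: "(\<exists>e\<in>Gd d. \<forall>x\<in>Vd d. e x = x) \<and>
          (\<forall>g\<in>Gd d. \<forall>h\<in>Gd d. \<exists>k\<in>Gd d. \<forall>x\<in>Vd d. k x = g (h x)) \<and>
          (\<forall>g\<in>Gd d. \<exists>h\<in>Gd d. \<forall>x\<in>Vd d. h (g x) = x)" for d
  proof (intro conjI ballI)
    show "\<exists>e\<in>Gd d. \<forall>x\<in>Vd d. e x = x" unfolding Gd_def
      by (rule bexI[of _ "act id"]) auto
  next
    fix g h assume "g \<in> Gd d" "h \<in> Gd d"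
    then obtain \<sigma> \<tau> where "\<sigma> permutes {..<d}" "\<tau> permutes {..<d}" "g = act \<sigma>" "h = act \<tau>"
      unfolding Gd_def by blast
    then show "\<exists>k\<in>Gd d. \<forall>x\<in>Vd d. k x = g (h x)" unfolding Gd_def
      by (intro bexI[of _ "act (\<tau> \<circ> \<sigma>)"]) (auto simp: act_act intro: permutes_compose)
  next
    fix g assume "g \<in> Gd d"
    then obtain \<sigma> where s: "\<sigma> permutes {..<d}" "g = act \<sigma>" unfolding Gd_def by blast
    show "\<exists>h\<in>Gd d. \<forall>x\<in>Vd d. h (g x) = x" unfolding Gd_def
      by (intro bexI[of _ "act (Hilbert_Choice.inv \<sigma>)"]) (use s permutes_inv permutes_inv_o(1)[OF s(1)] in \<open>auto simp: act_act\<close>)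
  qed
  have orth: "g ` Vd d \<subseteq> Vd d \<and> lin_on (Vd d) g \<and>
          (\<forall>x\<in>Vd d. \<forall>y\<in>Vd d. ip (C d) (g x) (g y) = ip (C d) x y)" if gG: "g \<in> Gd d" for g d
  proof -
    obtain \<sigma> where s: "\<sigma> permutes {..<d}" "g = act \<sigma>" using gG unfolding Gd_def by blast
    have "ip (C d) (act \<sigma> x) (act \<sigma> y) = ip (C d) x y" for x y
      unfolding ip_def act_apply using sum.reindex_bij_betw[OF C3[OF s(1)], of "\<lambda>c. x c * y c"] by simp
    moreover have "lin_on (Vd d) (act \<sigma>)"
      unfolding lin_on_def by (auto simp: act_def lin_comb_def)
    ultimately show ?thesis using act_Vd[OF s(1)] s(2) by auto
  qed
  have gam: "\<gamma> d ` Vd d \<subseteq> Vd (Suc d) \<and> lin_on (Vd d) (\<gamma> d) \<and>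
          (\<forall>x\<in>Vd d. \<forall>y\<in>Vd d. ip (C (Suc d)) (\<gamma> d x) (\<gamma> d y) = ip (C d) x y)" for d
  proof (intro conjI ballI)
    show "\<gamma> d ` Vd d \<subseteq> Vd (Suc d)" using \<gamma> Vd_mono[of d "Suc d"] by auto
    show "lin_on (Vd d) (\<gamma> d)" unfolding lin_on_def using \<gamma> lc by simp
    fix x y assume x: "x \<in> Vd d" and y: "y \<in> Vd d"
    have "ip (C (Suc d)) x y = ip (C d) x y" unfolding ip_def
      by (rule sum.mono_neutral_right) (use C1 C4 C2[OF x] in auto)
    then show "ip (C (Suc d)) (\<gamma> d x) (\<gamma> d y) = ip (C d) x y" using \<gamma> x y by simp
  qed
  have eqv: "\<gamma> d (g x) = g (\<gamma> d x)" if gx: "g \<in> Gd d" "x \<in> Vd d" for g x d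
  proof -
    obtain \<sigma> where s: "\<sigma> permutes {..<d}" "g = act \<sigma>" using gx(1) unfolding Gd_def by blast
    then show ?thesis using \<gamma> act_Vd[OF s(1) gx(2)] gx(2) by simp
  qed
  show ?thesis unfolding consistent_seq_def
  proof (intro conjI allI)
    fix d show "subspace_in (C d) (Vd d)" by (rule sub)
  next fix d show "Gd d \<subseteq> Gd (Suc d)" by (rule mono)
  next fix d show "\<exists>e\<in>Gd d. \<forall>x\<in>Vd d. e x = x" using grp by blast
  next fix d show "\<forall>g\<in>Gd d. \<forall>h\<in>Gd d. \<exists>k\<in>Gd d. \<forall>x\<in>Vd d. k x = g (h x)" using grp by blast
  next fix d show "\<forall>g\<in>Gd d. \<exists>h\<in>Gd d. \<forall>x\<in>Vd d. h (g x) = x" using grp by blast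
  next fix d show "\<forall>g\<in>Gd d. g ` Vd d \<subseteq> Vd d \<and> lin_on (Vd d) g \<and>
          (\<forall>x\<in>Vd d. \<forall>y\<in>Vd d. ip (C d) (g x) (g y) = ip (C d) x y)" using orth by blast
  next fix d show "\<gamma> d ` Vd d \<subseteq> Vd (Suc d)" using gam by blast
  next fix d show "lin_on (Vd d) (\<gamma> d)" using gam by blast
  next fix d show "\<forall>x\<in>Vd d. \<forall>y\<in>Vd d. ip (C (Suc d)) (\<gamma> d x) (\<gamma> d y) = ip (C d) x y" using gam by blast
  next fix d show "\<forall>g\<in>Gd d. \<forall>x\<in>Vd d. \<gamma> d (g x) = g (\<gamma> d x)" using eqv by blast
  qed
qed

end



lemma orth_rows:
  assumes "orth k Q" "a < k" "b < k"
  shows "(\<Sum>l<k. Q (a, l) * Q (b, l)) = (if a = b then 1 else 0)"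
proof -
  define M where "M = mat k k (\<lambda>(i,j). Q (i,j))"
  have Mc: "M \<in> carrier_mat k k" "transpose_mat M \<in> carrier_mat k k" unfolding M_def by auto
  have "transpose_mat M * M = 1\<^sub>m k"
  proof (rule eq_matI)
    fix i j assume ij: "i < dim_row (1\<^sub>m k)" "j < dim_col (1\<^sub>m k)"
    then have "(transpose_mat M * M) $$ (i,j) = (\<Sum>l<k. Q (l, i) * Q (l, j))"
      unfolding M_def by (simp add: scalar_prod_def row_def col_def sum.atLeast0_lessThan_Suc atLeast0LessThan)
    also have "\<dots> = 1\<^sub>m k $$ (i,j)" using assms(1) ij unfolding orth_def by auto
    finally show "(transpose_mat M * M) $$ (i,j) = 1\<^sub>m k $$ (i,j)" .
  qed (auto simp: M_def)
  from mat_mult_left_right_inverse[OF Mc(2) Mc(1) this]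
  have "M * transpose_mat M = 1\<^sub>m k" .
  then have "(M * transpose_mat M) $$ (a,b) = 1\<^sub>m k $$ (a,b)" by simp
  then show ?thesis using assms(2,3)
    unfolding M_def by (simp add: scalar_prod_def row_def col_def atLeast0LessThan)
qed




lemma rs1: "rowsys (\<lambda>i::nat. {i}) (\<lambda>\<sigma>. \<sigma>) UNIV 1"
  by unfold_locales auto

lemma case1: "consistent_seq C1 V1 G1 \<gamma>1 \<and> stable_from V1 G1 \<gamma>1 m m"
proof -
  interpret r: rowsys "\<lambda>i::nat. {i}" "\<lambda>\<sigma>. \<sigma>" UNIV 1 by (rule rs1)
  have V: "V1 = r.Vd" by (rule ext) (auto simp: V1_def r.Vd_def not_less)
  have G: "G1 = r.Gd" by (rule ext) (auto simp: G1_def r.Gd_def r.act_def fun_eq_iff comp_def)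
  have g: "\<forall>d. \<forall>x\<in>r.Vd d. \<gamma>1 d x = x" unfolding \<gamma>1_def r.Vd_def by (auto simp: fun_eq_iff not_less)
  have "consistent_seq C1 r.Vd r.Gd \<gamma>1"
  proof (rule r.consistent[OF _ _ _ _ _ _ g])
    show "\<And>d. finite (C1 d)" by (simp add: C1_def)
    show "\<And>d x c. x \<in> r.Vd d \<Longrightarrow> c \<notin> C1 d \<Longrightarrow> x c = 0" by (simp add: C1_def r.Vd_def)
    show "\<And>d \<sigma>. \<sigma> permutes {..<d} \<Longrightarrow> bij_betw \<sigma> (C1 d) (C1 d)"
      by (simp add: C1_def permutes_imp_bij)
    show "\<And>d. C1 d \<subseteq> C1 (Suc d)" by (auto simp: C1_def)
  qed auto
  moreover have "stable_from r.Vd r.Gd \<gamma>1 m m" by (rule r.stable[OF g]) simp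
  ultimately show ?thesis unfolding V G by simp
qed

definition mp2 :: "(nat \<Rightarrow> nat) \<Rightarrow> nat \<times> nat \<Rightarrow> nat \<times> nat" where
  "mp2 \<sigma> = map_prod \<sigma> id"
definition W2 :: "nat \<Rightarrow> (nat \<times> nat \<Rightarrow> real) set" where
  "W2 k = {X. \<forall>i j. k \<le> j \<longrightarrow> X (i, j) = 0}"

lemma rs2: "rowsys (\<lambda>c::nat\<times>nat. {fst c}) mp2 (W2 k) 1"
  by unfold_locales (auto simp: mp2_def W2_def fun_eq_iff map_prod.comp)

lemma V2_eq: "V2 k = rowsys.Vd (\<lambda>c::nat\<times>nat. {fst c}) (W2 k)"
  by (rule ext) (unfold rowsys.Vd_def[OF rs2], auto simp: V2_def W2_def not_less)

lemma G2_eq: "G2 k = rowsys.Gd mp2"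
  by (rule ext) (auto simp: G2_def rowsys.Gd_def[OF rs2] rowsys.act_def[OF rs2] fun_eq_iff comp_def mp2_def)

lemma g2: "\<forall>d. \<forall>x\<in>rowsys.Vd (\<lambda>c::nat\<times>nat. {fst c}) (W2 k) d. \<gamma>2 k d x = x"
  unfolding \<gamma>2_def V2_eq[symmetric] V2_def by (auto simp: fun_eq_iff not_less)

lemma case2: "consistent_seq (C2 k) (V2 k) (G2 k) (\<gamma>2 k) \<and> stable_from (V2 k) (G2 k) (\<gamma>2 k) m m"
proof -
  interpret r: rowsys "\<lambda>c::nat\<times>nat. {fst c}" mp2 "W2 k" 1 by (rule rs2)
  have "consistent_seq (C2 k) r.Vd r.Gd (\<gamma>2 k)"
  proof (rule r.consistent[OF _ _ _ _ _ _ g2])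
    show "\<And>d. finite (C2 k d)" by (simp add: C2_def)
    show "\<And>d x c. x \<in> r.Vd d \<Longrightarrow> c \<notin> C2 k d \<Longrightarrow> x c = 0"
      unfolding V2_eq[symmetric] by (auto simp: C2_def V2_def) (meson not_le)+
    show "\<And>d \<sigma>. \<sigma> permutes {..<d} \<Longrightarrow> bij_betw (mp2 \<sigma>) (C2 k d) (C2 k d)"
      unfolding mp2_def C2_def by (intro bij_betw_map_prod) (auto simp: permutes_imp_bij)
    show "\<And>d. C2 k d \<subseteq> C2 k (Suc d)" by (auto simp: C2_def)
  qed (auto simp: W2_def lin_comb_def)
  moreover have "stable_from r.Vd r.Gd (\<gamma>2 k) m m" by (rule r.stable[OF g2]) simp
  ultimately show ?thesis unfolding V2_eq G2_eq by simp
qed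

definition mp3 :: "(nat \<Rightarrow> nat) \<Rightarrow> nat \<times> nat \<Rightarrow> nat \<times> nat" where
  "mp3 \<sigma> = map_prod \<sigma> \<sigma>"
definition W3 :: "(nat \<times> nat \<Rightarrow> real) set" where
  "W3 = {X. \<forall>i j. X (i, j) = X (j, i)}"

lemma rs3: "rowsys (\<lambda>c::nat\<times>nat. {fst c, snd c}) mp3 W3 2"
proof unfold_locales
  fix c :: "nat \<times> nat" show "card {fst c, snd c} \<le> 2" by (simp add: card_insert_le_m1)
qed (auto simp: mp3_def W3_def fun_eq_iff map_prod.comp)

lemma case3: "consistent_seq C3 V3 G3 \<gamma>3 \<and> stable_from V3 G3 \<gamma>3 m (2 * m)"
proof -
  interpret r: rowsys "\<lambda>c::nat\<times>nat. {fst c, snd c}" mp3 W3 2 by (rule rs3)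
  have V: "V3 = r.Vd" by (rule ext) (unfold r.Vd_def, auto simp: V3_def W3_def not_less)
  have G: "G3 = r.Gd" by (rule ext) (auto simp: G3_def r.Gd_def r.act_def fun_eq_iff comp_def mp3_def)
  have g: "\<forall>d. \<forall>x\<in>r.Vd d. \<gamma>3 d x = x" unfolding \<gamma>3_def V[symmetric] V3_def
    by (auto simp: fun_eq_iff not_less)
  have "consistent_seq C3 r.Vd r.Gd \<gamma>3"
  proof (rule r.consistent[OF _ _ _ _ _ _ g])
    show "\<And>d. finite (C3 d)" by (simp add: C3_def)
    show "\<And>d x c. x \<in> r.Vd d \<Longrightarrow> c \<notin> C3 d \<Longrightarrow> x c = 0"
      unfolding V[symmetric] by (auto simp: C3_def V3_def) (meson not_le)+
    show "\<And>d \<sigma>. \<sigma> permutes {..<d} \<Longrightarrow> bij_betw (mp3 \<sigma>) (C3 d) (C3 d)"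
      unfolding mp3_def C3_def by (intro bij_betw_map_prod) (auto simp: permutes_imp_bij)
    show "\<And>d. C3 d \<subseteq> C3 (Suc d)" by (auto simp: C3_def)
  qed (auto simp: W3_def lin_comb_def)
  moreover have "stable_from r.Vd r.Gd \<gamma>3 m (2 * m)" by (rule r.stable[OF g]) simp
  ultimately show ?thesis unfolding V G by simp
qed




definition gQ :: "nat \<Rightarrow> (nat \<times> nat \<Rightarrow> real) \<Rightarrow> (nat \<times> nat \<Rightarrow> real) \<Rightarrow> (nat \<times> nat \<Rightarrow> real)" where
  "gQ k Q X = (\<lambda>(i, j). if j < k then (\<Sum>l<k. X (i, l) * Q (l, j)) else 0)"
definition mm :: "nat \<Rightarrow> (nat \<times> nat \<Rightarrow> real) \<Rightarrow> (nat \<times> nat \<Rightarrow> real) \<Rightarrow> (nat \<times> nat \<Rightarrow> real)" where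
  "mm k P Q = (\<lambda>(a, b). \<Sum>l<k. P (a, l) * Q (l, b))"
definition Iq :: "nat \<times> nat \<Rightarrow> real" where
  "Iq = (\<lambda>(a, b). if a = b then 1 else 0)"
definition QT :: "(nat \<times> nat \<Rightarrow> real) \<Rightarrow> (nat \<times> nat \<Rightarrow> real)" where
  "QT Q = (\<lambda>(a, b). Q (b, a))"

lemma gQ_apply: "gQ k Q X (i, j) = (if j < k then (\<Sum>l<k. X (i, l) * Q (l, j)) else 0)"
  by (simp add: gQ_def)

lemma kron:
  fixes f :: "nat \<Rightarrow> nat \<Rightarrow> real"
  shows "(\<Sum>s<k. \<Sum>t<k. f s t * (if s = t then 1 else 0)) = (\<Sum>s<k. f s s)"
proof (rule sum.cong)
  fix s assume s: "s \<in> {..<k}"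
  have "(\<Sum>t<k. f s t * (if s = t then 1 else 0)) = (\<Sum>t<k. (if s = t then f s t else 0))"
    by (rule sum.cong) auto
  also have "\<dots> = f s s" using s by (simp add: sum.delta)
  finally show "(\<Sum>t<k. f s t * (if s = t then 1 else 0)) = f s s" .
qed simp

lemma G4_eq: "G4 k d = {(\<lambda>X. gQ k Q (X \<circ> mp2 \<sigma>)) | \<sigma> Q. \<sigma> permutes {..<d} \<and> orth k Q}"
proof -
  have e: "\<And>\<sigma> Q. (\<lambda>X. gQ k Q (X \<circ> mp2 \<sigma>)) =
     (\<lambda>X (i, j). if j < k then (\<Sum>l<k. X (\<sigma> i, l) * Q (l, j)) else 0)"
    by (auto simp: fun_eq_iff gQ_def mp2_def)
  show ?thesis unfolding G4_def by (simp only: e)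
qed

lemma gQ_mm: "gQ k Q (gQ k P X) = gQ k (mm k P Q) X"
proof (rule ext, clarify)
  fix i j
  show "gQ k Q (gQ k P X) (i, j) = gQ k (mm k P Q) X (i, j)"
  proof (cases "j < k")
    case True
    have "(\<Sum>l<k. gQ k P X (i, l) * Q (l, j)) = (\<Sum>l<k. (\<Sum>l'<k. X (i, l') * P (l', l)) * Q (l, j))"
      by (rule sum.cong) (auto simp: gQ_apply)
    also have "\<dots> = (\<Sum>l<k. \<Sum>l'<k. X (i, l') * (P (l', l) * Q (l, j)))"
      by (simp add: sum_distrib_right mult.assoc)
    also have "\<dots> = (\<Sum>l'<k. \<Sum>l<k. X (i, l') * (P (l', l) * Q (l, j)))" by (rule sum.swap)
    also have "\<dots> = (\<Sum>l'<k. X (i, l') * mm k P Q (l', j))"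
      by (simp add: mm_def sum_distrib_left)
    finally show ?thesis using True by (simp add: gQ_apply)
  qed (simp add: gQ_apply)
qed

lemma orth_mm: assumes P: "orth k P" and Q: "orth k Q" shows "orth k (mm k P Q)"
  unfolding orth_def
proof (intro allI impI)
  fix a b assume ab: "a < k" "b < k"
  have "(\<Sum>l<k. mm k P Q (l, a) * mm k P Q (l, b)) =
        (\<Sum>l<k. (\<Sum>s<k. P (l, s) * Q (s, a)) * (\<Sum>t<k. P (l, t) * Q (t, b)))"
    by (simp add: mm_def)
  also have "\<dots> = (\<Sum>l<k. \<Sum>s<k. \<Sum>t<k. (Q (s, a) * Q (t, b)) * (P (l, s) * P (l, t)))"
    by (simp add: sum_product mult_ac)
  also have "\<dots> = (\<Sum>s<k. \<Sum>l<k. \<Sum>t<k. (Q (s, a) * Q (t, b)) * (P (l, s) * P (l, t)))"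
    by (rule sum.swap)
  also have "\<dots> = (\<Sum>s<k. \<Sum>t<k. \<Sum>l<k. (Q (s, a) * Q (t, b)) * (P (l, s) * P (l, t)))"
    by (rule sum.cong[OF refl], rule sum.swap)
  also have "\<dots> = (\<Sum>s<k. \<Sum>t<k. (Q (s, a) * Q (t, b)) * (if s = t then 1 else 0))"
  proof (intro sum.cong refl)
    fix s t assume "s \<in> {..<k}" "t \<in> {..<k}"
    then show "(\<Sum>l<k. (Q (s, a) * Q (t, b)) * (P (l, s) * P (l, t))) =
          (Q (s, a) * Q (t, b)) * (if s = t then 1 else 0)"
      using P unfolding orth_def by (simp add: sum_distrib_left[symmetric])
  qed
  also have "\<dots> = (\<Sum>s<k. Q (s, a) * Q (s, b))" by (rule kron)
  also have "\<dots> = (if a = b then 1 else 0)" using Q ab unfolding orth_def by simp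
  finally show "(\<Sum>l<k. mm k P Q (l, a) * mm k P Q (l, b)) = (if a = b then 1 else 0)" .
qed

lemma orth_Iq: "orth k Iq"
  unfolding orth_def
proof (intro allI impI)
  fix a b assume a: "a < k" "b < k"
  have "(\<Sum>l<k. Iq (l, a) * Iq (l, b)) = (\<Sum>l<k. if l = a then (if a = b then 1 else 0) else 0)"
    by (rule sum.cong) (auto simp: Iq_def)
  also have "\<dots> = (if a = b then 1 else 0)" using a by (simp add: sum.delta')
  finally show "(\<Sum>l<k. Iq (l, a) * Iq (l, b)) = (if a = b then 1 else 0)" .
qed

lemma orth_QT: assumes q: "orth k Q" shows "orth k (QT Q)"
  unfolding orth_def
proof (intro allI impI)
  fix a b assume "a < k" "b < k"
  then show "(\<Sum>l<k. QT Q (l, a) * QT Q (l, b)) = (if a = b then 1 else 0)"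
    using orth_rows[OF q] by (simp add: QT_def)
qed

lemma gQ_cong: "(\<And>a b. a < k \<Longrightarrow> b < k \<Longrightarrow> P (a, b) = Q (a, b)) \<Longrightarrow> gQ k P = gQ k Q"
  unfolding gQ_def by (intro ext) (auto intro!: sum.cong)

lemma gQ_Iq: "X \<in> W2 k \<Longrightarrow> gQ k Iq X = X"
proof (rule ext, clarify)
  fix i j assume X: "X \<in> W2 k"
  show "gQ k Iq X (i, j) = X (i, j)"
  proof (cases "j < k")
    case True
    have "(\<Sum>l<k. X (i, l) * Iq (l, j)) = (\<Sum>l<k. if l = j then X (i, l) else 0)"
      by (rule sum.cong) (auto simp: Iq_def)
    then show ?thesis using True by (simp add: gQ_apply sum.delta')
  next
    case False then show ?thesis using X by (simp add: gQ_apply W2_def)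
  qed
qed

lemma gQ_inv: assumes "orth k Q" "X \<in> W2 k" shows "gQ k (QT Q) (gQ k Q X) = X"
proof -
  have "gQ k (mm k Q (QT Q)) = gQ k Iq"
    by (rule gQ_cong) (use assms(1) orth_rows in \<open>simp add: mm_def QT_def Iq_def\<close>)
  then show ?thesis using gQ_mm gQ_Iq[OF assms(2)] by metis
qed

lemma gQ_W: "gQ k Q X \<in> W2 k"
  by (simp add: W2_def gQ_apply)

lemma gQ_V: "X \<in> V2 k d \<Longrightarrow> gQ k Q X \<in> V2 k d"
  unfolding V2_def by (auto simp: gQ_apply)

lemma gQ_act: "gQ k Q X \<circ> mp2 \<sigma> = gQ k Q (X \<circ> mp2 \<sigma>)"
  by (auto simp: fun_eq_iff gQ_def mp2_def)

lemma gQ_lin: "gQ k Q (lin_comb a X b Y) = lin_comb a (gQ k Q X) b (gQ k Q Y)"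
  by (auto simp: fun_eq_iff gQ_def lin_comb_def sum.distrib sum_distrib_left algebra_simps)

lemma ip_C2: "ip (C2 k d) X Y = (\<Sum>i<d. \<Sum>j<k. X (i, j) * Y (i, j))"
  unfolding ip_def C2_def by (simp add: sum.cartesian_product)

lemma gQ_ip: assumes Q: "orth k Q"
  shows "ip (C2 k d) (gQ k Q X) (gQ k Q Y) = ip (C2 k d) X Y"
  unfolding ip_C2
proof (rule sum.cong[OF refl])
  fix i assume "i \<in> {..<d}"
  have "(\<Sum>j<k. gQ k Q X (i, j) * gQ k Q Y (i, j)) =
        (\<Sum>j<k. (\<Sum>l<k. X (i, l) * Q (l, j)) * (\<Sum>t<k. Y (i, t) * Q (t, j)))"
    by (rule sum.cong) (auto simp: gQ_apply)
  also have "\<dots> = (\<Sum>j<k. \<Sum>l<k. \<Sum>t<k. (X (i, l) * Y (i, t)) * (Q (l, j) * Q (t, j)))"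
    by (simp add: sum_product mult_ac)
  also have "\<dots> = (\<Sum>l<k. \<Sum>j<k. \<Sum>t<k. (X (i, l) * Y (i, t)) * (Q (l, j) * Q (t, j)))"
    by (rule sum.swap)
  also have "\<dots> = (\<Sum>l<k. \<Sum>t<k. \<Sum>j<k. (X (i, l) * Y (i, t)) * (Q (l, j) * Q (t, j)))"
    by (rule sum.cong[OF refl], rule sum.swap)
  also have "\<dots> = (\<Sum>l<k. \<Sum>t<k. (X (i, l) * Y (i, t)) * (if l = t then 1 else 0))"
  proof (intro sum.cong refl)
    fix l t assume "l \<in> {..<k}" "t \<in> {..<k}"
    then show "(\<Sum>j<k. (X (i, l) * Y (i, t)) * (Q (l, j) * Q (t, j))) =
          (X (i, l) * Y (i, t)) * (if l = t then 1 else 0)"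
      using orth_rows[OF Q] by (simp add: sum_distrib_left[symmetric])
  qed
  also have "\<dots> = (\<Sum>l<k. X (i, l) * Y (i, l))" by (rule kron)
  finally show "(\<Sum>j<k. gQ k Q X (i, j) * gQ k Q Y (i, j)) = (\<Sum>j<k. X (i, j) * Y (i, j))" .
qed


lemma V2_W2: "x \<in> V2 k d \<Longrightarrow> x \<in> W2 k" by (simp add: V2_def W2_def)

lemma W2_comp: "x \<in> W2 k \<Longrightarrow> x \<circ> mp2 \<sigma> \<in> W2 k" by (simp add: W2_def mp2_def)

lemma mp2_id: "mp2 id = id" by (simp add: mp2_def map_prod.id)

lemma mp2_comp: "mp2 \<tau> \<circ> mp2 \<sigma> = mp2 (\<tau> \<circ> \<sigma>)" by (simp add: mp2_def map_prod.comp)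

lemma act2_G2: assumes "\<sigma> permutes {..<d}" shows "(\<lambda>X. X \<circ> mp2 \<sigma>) \<in> G2 k d"
proof -
  have e: "(\<lambda>X. X \<circ> mp2 \<sigma>) = rowsys.act mp2 \<sigma>" by (rule ext) (simp add: rowsys.act_def[OF rs2])
  show ?thesis unfolding G2_eq rowsys.Gd_def[OF rs2]
    by (intro CollectI exI[of _ \<sigma>] conjI e assms)
qed

lemma case4_cons: "consistent_seq (C2 k) (V2 k) (G4 k) (\<gamma>2 k)"
proof -
  have c2: "consistent_seq (C2 k) (V2 k) (G2 k) (\<gamma>2 k)" using case2 by blast
  have sub: "\<forall>d. subspace_in (C2 k d) (V2 k d)" using c2 unfolding consistent_seq_def by (elim conjE) assumption
  have G2p: "\<forall>d. \<forall>g\<in>G2 k d. g ` V2 k d \<subseteq> V2 k d \<and> lin_on (V2 k d) g \<and>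
          (\<forall>x\<in>V2 k d. \<forall>y\<in>V2 k d. ip (C2 k d) (g x) (g y) = ip (C2 k d) x y)"
    using c2 unfolding consistent_seq_def by (elim conjE) assumption
  have gam: "\<forall>d. \<gamma>2 k d ` V2 k d \<subseteq> V2 k (Suc d) \<and> lin_on (V2 k d) (\<gamma>2 k d) \<and>
          (\<forall>x\<in>V2 k d. \<forall>y\<in>V2 k d. ip (C2 k (Suc d)) (\<gamma>2 k d x) (\<gamma>2 k d y) = ip (C2 k d) x y)"
    using c2 unfolding consistent_seq_def by (elim conjE) assumption
  have gfix: "\<forall>d. \<forall>x\<in>V2 k d. \<gamma>2 k d x = x" using g2 unfolding V2_eq[symmetric] .
  have actV: "x \<circ> mp2 \<sigma> \<in> V2 k d" if "\<sigma> permutes {..<d}" "x \<in> V2 k d" for x \<sigma> d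
    using conjunct1[OF G2p[rule_format, OF act2_G2[OF that(1)]]] that(2) by (auto simp: image_subset_iff)
  show ?thesis unfolding consistent_seq_def
  proof (intro conjI allI)
    fix d show "subspace_in (C2 k d) (V2 k d)" using sub by simp
  next
    fix d show "G4 k d \<subseteq> G4 k (Suc d)"
    proof
      fix g assume "g \<in> G4 k d"
      then obtain \<sigma> Q where s: "\<sigma> permutes {..<d}" "orth k Q" "g = (\<lambda>X. gQ k Q (X \<circ> mp2 \<sigma>))"
        unfolding G4_eq by blast
      have "\<sigma> permutes {..<Suc d}" using permutes_subset[OF s(1)] by auto
      then show "g \<in> G4 k (Suc d)" unfolding G4_eq
        by (intro CollectI exI[of _ \<sigma>] exI[of _ Q] conjI s(2,3))
    qed
  next
    fix d show "\<exists>e\<in>G4 k d. \<forall>x\<in>V2 k d. e x = x"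
    proof (rule bexI[of _ "\<lambda>X. gQ k Iq (X \<circ> mp2 id)"])
      show "\<forall>x\<in>V2 k d. gQ k Iq (x \<circ> mp2 id) = x" using gQ_Iq V2_W2 by (simp add: mp2_id)
      show "(\<lambda>X. gQ k Iq (X \<circ> mp2 id)) \<in> G4 k d" unfolding G4_eq
        by (intro CollectI exI[of _ id] exI[of _ Iq] conjI refl orth_Iq permutes_id)
    qed
  next
    fix d show "\<forall>g\<in>G4 k d. \<forall>h\<in>G4 k d. \<exists>k'\<in>G4 k d. \<forall>x\<in>V2 k d. k' x = g (h x)"
    proof (intro ballI)
      fix g h assume "g \<in> G4 k d" "h \<in> G4 k d"
      then obtain \<sigma> Q \<tau> P where s: "\<sigma> permutes {..<d}" "orth k Q" "g = (\<lambda>X. gQ k Q (X \<circ> mp2 \<sigma>))"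
        "\<tau> permutes {..<d}" "orth k P" "h = (\<lambda>X. gQ k P (X \<circ> mp2 \<tau>))"
        unfolding G4_eq by blast
      have eq: "\<forall>x. gQ k (mm k P Q) (x \<circ> mp2 (\<tau> \<circ> \<sigma>)) = g (h x)"
        unfolding s(3,6) gQ_act gQ_mm mp2_comp[symmetric] by (simp add: comp_assoc)
      have mem: "(\<lambda>X. gQ k (mm k P Q) (X \<circ> mp2 (\<tau> \<circ> \<sigma>))) \<in> G4 k d"
        unfolding G4_eq
        by (intro CollectI exI[of _ "\<tau> \<circ> \<sigma>"] exI[of _ "mm k P Q"] conjI refl orth_mm permutes_compose s(1,2,4,5))
      show "\<exists>k'\<in>G4 k d. \<forall>x\<in>V2 k d. k' x = g (h x)"
        by (rule bexI[OF _ mem]) (use eq in simp)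
    qed
  next
    fix d show "\<forall>g\<in>G4 k d. \<exists>h\<in>G4 k d. \<forall>x\<in>V2 k d. h (g x) = x"
    proof
      fix g assume "g \<in> G4 k d"
      then obtain \<sigma> Q where s: "\<sigma> permutes {..<d}" "orth k Q" "g = (\<lambda>X. gQ k Q (X \<circ> mp2 \<sigma>))"
        unfolding G4_eq by blast
      have io: "\<sigma> \<circ> Hilbert_Choice.inv \<sigma> = id" using permutes_inv_o(1)[OF s(1)] .
      have eq: "\<forall>x\<in>V2 k d. gQ k (QT Q) (g x \<circ> mp2 (Hilbert_Choice.inv \<sigma>)) = x"
      proof
        fix x assume x: "x \<in> V2 k d"
        have "g x \<circ> mp2 (Hilbert_Choice.inv \<sigma>) = gQ k Q x"
          unfolding s(3) gQ_act comp_assoc mp2_comp io mp2_id by simp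
        then show "gQ k (QT Q) (g x \<circ> mp2 (Hilbert_Choice.inv \<sigma>)) = x" using gQ_inv[OF s(2) V2_W2[OF x]] by simp
      qed
      have mem: "(\<lambda>X. gQ k (QT Q) (X \<circ> mp2 (Hilbert_Choice.inv \<sigma>))) \<in> G4 k d"
        unfolding G4_eq
        by (intro CollectI exI[of _ "Hilbert_Choice.inv \<sigma>"] exI[of _ "QT Q"] conjI refl orth_QT permutes_inv s(1,2))
      show "\<exists>h\<in>G4 k d. \<forall>x\<in>V2 k d. h (g x) = x"
        by (rule bexI[OF _ mem]) (use eq in simp)
    qed
  next
    fix d show "\<forall>g\<in>G4 k d. g ` V2 k d \<subseteq> V2 k d \<and> lin_on (V2 k d) g \<and>
          (\<forall>x\<in>V2 k d. \<forall>y\<in>V2 k d. ip (C2 k d) (g x) (g y) = ip (C2 k d) x y)"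
    proof
      fix g assume "g \<in> G4 k d"
      then obtain \<sigma> Q where s: "\<sigma> permutes {..<d}" "orth k Q" "g = (\<lambda>X. gQ k Q (X \<circ> mp2 \<sigma>))"
        unfolding G4_eq by blast
      have ip2: "ip (C2 k d) (x \<circ> mp2 \<sigma>) (y \<circ> mp2 \<sigma>) = ip (C2 k d) x y" if "x \<in> V2 k d" "y \<in> V2 k d" for x y
        using conjunct2[OF conjunct2[OF G2p[rule_format, OF act2_G2[OF s(1)]]]] that by blast
      have lc: "lin_comb a x b y \<circ> mp2 \<sigma> = lin_comb a (x \<circ> mp2 \<sigma>) b (y \<circ> mp2 \<sigma>)" for a b x y
        by (simp add: lin_comb_def fun_eq_iff)
      show "g ` V2 k d \<subseteq> V2 k d \<and> lin_on (V2 k d) g \<and>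
          (\<forall>x\<in>V2 k d. \<forall>y\<in>V2 k d. ip (C2 k d) (g x) (g y) = ip (C2 k d) x y)"
        unfolding s(3) lin_on_def using actV[OF s(1)] gQ_V gQ_lin lc gQ_ip[OF s(2)] ip2 by auto
    qed
  next
    fix d show "\<gamma>2 k d ` V2 k d \<subseteq> V2 k (Suc d)" using conjunct1[OF gam[rule_format, of d]] .
  next
    fix d show "lin_on (V2 k d) (\<gamma>2 k d)" using conjunct1[OF conjunct2[OF gam[rule_format, of d]]] .
  next
    fix d show "\<forall>x\<in>V2 k d. \<forall>y\<in>V2 k d. ip (C2 k (Suc d)) (\<gamma>2 k d x) (\<gamma>2 k d y) = ip (C2 k d) x y"
      using conjunct2[OF conjunct2[OF gam[rule_format, of d]]] by blast
  next
    fix d show "\<forall>g\<in>G4 k d. \<forall>x\<in>V2 k d. \<gamma>2 k d (g x) = g (\<gamma>2 k d x)"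
    proof (intro ballI)
      fix g x assume "g \<in> G4 k d" and x: "x \<in> V2 k d"
      then obtain \<sigma> Q where s: "\<sigma> permutes {..<d}" "orth k Q" "g = (\<lambda>X. gQ k Q (X \<circ> mp2 \<sigma>))"
        unfolding G4_eq by blast
      have "g x \<in> V2 k d" unfolding s(3) using gQ_V actV[OF s(1) x] by blast
      then show "\<gamma>2 k d (g x) = g (\<gamma>2 k d x)" using gfix x by simp
    qed
  qed
qed


lemma case4_stab: "stable_from (V2 k) (G4 k) (\<gamma>2 k) m (2 * m)"
proof -
  interpret r: rowsys "\<lambda>c::nat\<times>nat. {fst c}" mp2 "W2 k" 1 by (rule rs2)
  have V: "V2 k = r.Vd" by (rule V2_eq)
  have actE: "r.act \<sigma> X = X \<circ> mp2 \<sigma>" for \<sigma> X by (simp add: r.act_def)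
  have g: "\<forall>d. \<forall>x\<in>r.Vd d. \<gamma>2 k d x = x" by (rule g2)
  have cons: "consistent_seq (C2 k) r.Vd (G4 k) (\<gamma>2 k)" using case4_cons[of k] unfolding V .
  have Gmono: "G4 k d \<subseteq> G4 k (Suc d)" for d
    using cons unfolding consistent_seq_def by (elim conjE) (erule allE)
  have GV: "g x \<in> r.Vd d" if gx: "g \<in> G4 k d" "x \<in> r.Vd d" for g x d
  proof -
    obtain \<sigma> Q where s: "\<sigma> permutes {..<d}" "orth k Q" "g = (\<lambda>X. gQ k Q (X \<circ> mp2 \<sigma>))"
      using gx(1) unfolding G4_eq by blast
    have "r.act \<sigma> x \<in> r.Vd d" using r.act_Vd[OF s(1) gx(2)] .
    then show ?thesis unfolding s(3) using gQ_V[of _ k d Q] unfolding V actE by blast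
  qed
  have inv4: "f (r.act \<sigma> x) = f x"
    if f: "f \<in> invariant_polys (r.Vd n) (G4 k n) m" and \<sigma>: "\<sigma> permutes {..<n}" and x: "x \<in> r.Vd n"
    for f \<sigma> x n
  proof -
    have mem: "(\<lambda>X. gQ k Iq (X \<circ> mp2 \<sigma>)) \<in> G4 k n" unfolding G4_eq
      by (intro CollectI exI[of _ \<sigma>] exI[of _ Iq] conjI refl orth_Iq \<sigma>)
    have "x \<in> W2 k" using x r.Vd_W by blast
    then have "gQ k Iq (x \<circ> mp2 \<sigma>) = r.act \<sigma> x" using gQ_Iq W2_comp actE by simp
    then show ?thesis using f mem x unfolding invariant_polys_def by force
  qed
  have wcomm: "r.wU d U (gQ k Q y) = gQ k Q (r.wU d U y)" for d U Q y
    unfolding r.wU_def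
  proof (rule ext, clarify)
    fix i j
    let ?\<tau> = "transpose (r.jU d U) d"
    show "r.act ?\<tau> (r.pi U (gQ k Q y)) (i, j) = gQ k Q (r.act ?\<tau> (r.pi U y)) (i, j)"
      by (cases "?\<tau> i \<in> U") (simp_all add: actE r.pi_def gQ_apply mp2_def)
  qed
  show ?thesis unfolding V stable_from_def
  proof (intro allI impI)
    fix d assume dD: "2 * m \<le> d"
    let ?R = "restr (r.Vd d) (\<gamma>2 k d)"
    have R: "\<And>F. ?R F = (\<lambda>x. if x \<in> r.Vd d then F x else 0)" using r.restr_id g by blast
    have sub: "r.Vd d \<subseteq> r.Vd (Suc d)" using r.Vd_mono by simp
    show "bij_betw ?R (invariant_polys (r.Vd (Suc d)) (G4 k (Suc d)) m) (invariant_polys (r.Vd d) (G4 k d) m)"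
      unfolding bij_betw_def
    proof (intro conjI)
      show "inj_on ?R (invariant_polys (r.Vd (Suc d)) (G4 k (Suc d)) m)"
      proof (rule inj_onI)
        fix F1 F2 assume F1: "F1 \<in> invariant_polys (r.Vd (Suc d)) (G4 k (Suc d)) m"
          and F2: "F2 \<in> invariant_polys (r.Vd (Suc d)) (G4 k (Suc d)) m" and e: "?R F1 = ?R F2"
        have ag: "F1 x = F2 x" if "x \<in> r.Vd d" for x using fun_cong[OF e, of x] that R by simp
        have p1: "F1 \<in> poly_funs (r.Vd (Suc d)) m" using F1 unfolding invariant_polys_def by blast
        have p2: "F2 \<in> poly_funs (r.Vd (Suc d)) m" using F2 unfolding invariant_polys_def by blast
        show "F1 = F2"
          by (rule r.inj_main[OF _ p1 p2 inv4[OF F1] inv4[OF F2] ag]) (use dD in auto)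
      qed
      show "?R ` invariant_polys (r.Vd (Suc d)) (G4 k (Suc d)) m = invariant_polys (r.Vd d) (G4 k d) m"
      proof (intro equalityI subsetI)
        fix f assume "f \<in> ?R ` invariant_polys (r.Vd (Suc d)) (G4 k (Suc d)) m"
        then obtain F where F: "F \<in> invariant_polys (r.Vd (Suc d)) (G4 k (Suc d)) m" and f: "f = ?R F" by blast
        have fF: "f = (\<lambda>x. if x \<in> r.Vd d then F x else 0)" using f R by simp
        have pF: "F \<in> poly_funs (r.Vd (Suc d)) m" using F unfolding invariant_polys_def by blast
        show "f \<in> invariant_polys (r.Vd d) (G4 k d) m" unfolding invariant_polys_def
        proof (intro CollectI conjI ballI)
          show "f \<in> poly_funs (r.Vd d) m" unfolding fF using r.poly_restr[OF pF] .
          fix g x assume gG: "g \<in> G4 k d" and x: "x \<in> r.Vd d"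
          have "g \<in> G4 k (Suc d)" using Gmono gG by blast
          then have "F (g x) = F x" using F x sub unfolding invariant_polys_def by blast
          then show "f (g x) = f x" unfolding fF using GV[OF gG x] x by simp
        qed
      next
        fix f assume f: "f \<in> invariant_polys (r.Vd d) (G4 k d) m"
        have pf: "f \<in> poly_funs (r.Vd d) m" using f unfolding invariant_polys_def by blast
        have fperm: "\<And>\<rho> y. \<rho> permutes {..<d} \<Longrightarrow> y \<in> r.Vd d \<Longrightarrow> f (r.act \<rho> y) = f y"
          using inv4[OF f] by blast
        have "r.ext d f \<in> invariant_polys (r.Vd (Suc d)) (G4 k (Suc d)) m"
          unfolding invariant_polys_def
        proof (intro CollectI conjI ballI)
          show "r.ext d f \<in> poly_funs (r.Vd (Suc d)) m" using r.ext_poly[OF pf] .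
          fix g x assume gG: "g \<in> G4 k (Suc d)" and x: "x \<in> r.Vd (Suc d)"
          obtain \<sigma> Q where s: "\<sigma> permutes {..<Suc d}" "orth k Q" "g = (\<lambda>X. gQ k Q (X \<circ> mp2 \<sigma>))"
            using gG unfolding G4_eq by blast
          have y: "r.act \<sigma> x \<in> r.Vd (Suc d)" using r.act_Vd[OF s(1) x] .
          have gx: "g x = gQ k Q (r.act \<sigma> x)" using s(3) actE by simp
          have hV: "gQ k Q (r.act \<sigma> x) \<in> r.Vd (Suc d)" using gQ_V y unfolding V[symmetric] by blast
          have memQ: "(\<lambda>X. gQ k Q (X \<circ> mp2 id)) \<in> G4 k d" unfolding G4_eq
            by (intro CollectI exI[of _ id] exI[of _ Q] conjI refl s(2) permutes_id)
          have fh: "f (gQ k Q y) = f y" if "y \<in> r.Vd d" for y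
            using f memQ that unfolding invariant_polys_def by (force simp: mp2_id)
          have "r.ext d f (g x) = r.ext d f (r.act \<sigma> x)"
            unfolding gx by (rule r.ext_inv_h[where h="gQ k Q" and x="r.act \<sigma> x" and d=d and f=f]) (use y hV wcomm fh in auto)
          also have "\<dots> = r.ext d f x" by (rule r.ext_inv_perm[OF s(1) x fperm])
          finally show "r.ext d f (g x) = r.ext d f x" .
        qed
        moreover have "?R (r.ext d f) = f"
        proof
          fix x show "?R (r.ext d f) x = f x"
            using R r.ext_restr pf by (auto simp: poly_funs_def)
        qed
        ultimately show "f \<in> ?R ` invariant_polys (r.Vd (Suc d)) (G4 k (Suc d)) m" by force
      qed
    qed
  qed
qed


theorem theorem5p1:
  fixes k m :: nat
  shows "consistent_seq C1 V1 G1 \<gamma>1 \<and> stable_from V1 G1 \<gamma>1 m m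
       \<and> consistent_seq (C2 k) (V2 k) (G2 k) (\<gamma>2 k) \<and> stable_from (V2 k) (G2 k) (\<gamma>2 k) m m
       \<and> consistent_seq C3 V3 G3 \<gamma>3 \<and> stable_from V3 G3 \<gamma>3 m (2 * m)
       \<and> consistent_seq (C2 k) (V2 k) (G4 k) (\<gamma>2 k) \<and> stable_from (V2 k) (G4 k) (\<gamma>2 k) m (2 * m)"
    using case1[of m] case2[of k m] case3[of m] case4_cons[of k] case4_stab[of k m] by blast

end
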